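(* Let $p$ be a prime and let $G$ be a finite top $p$-group such that $Z(G)$ and $G/G'$ are elementary abelian. Then $G$ is the direct product of a special $p$-group and an abelian group.
   Context: For a group $H$, $H'$ denotes its commutator subgroup and $Z(H)$ its center. A finite group $G$ is top if $|H/H'| < |G/G'|$ for every proper subgroup $H<G$. A finite $p$-group $P$ is special if $P' = Z(P) = \Phi(P)$, where $\Phi(P)$ is the Frattini subgroup of $P$. *)

theory Defs
  imports "HOL-Algebra.Algebra"
begin

definition commutator_subgroup :: "('a, 'b) monoid_scheme \<Rightarrow> 'a set" where
  "commutator_subgroup H = derived H (carrier H)"

definition center :: "('a, 'b) monoid_scheme \<Rightarrow> 'a set" where
  "center H = {z \<in> carrier H. \<forall>g \<in> carrier H. z \<otimes>\<^bsub>H\<^esub> g = g \<otimes>\<^bsub>H\<^esub> z}"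

definition maximal_subgroup :: "'a set \<Rightarrow> ('a, 'b) monoid_scheme \<Rightarrow> bool" where
  "maximal_subgroup M H \<longleftrightarrow> subgroup M H \<and> M \<noteq> carrier H \<and>
     (\<forall>K. subgroup K H \<and> M \<subseteq> K \<longrightarrow> K = M \<or> K = carrier H)"

definition frattini :: "('a, 'b) monoid_scheme \<Rightarrow> 'a set" where
  "frattini H = carrier H \<inter> \<Inter> {M. maximal_subgroup M H}"

definition p_group :: "nat \<Rightarrow> ('a, 'b) monoid_scheme \<Rightarrow> bool" where
  "p_group p H \<longleftrightarrow> group H \<and> finite (carrier H) \<and> (\<exists>n. card (carrier H) = p ^ n)"

definition elementary_abelian :: "nat \<Rightarrow> ('a, 'b) monoid_scheme \<Rightarrow> bool" where
  "elementary_abelian p H \<longleftrightarrow> comm_group H \<and> (\<forall>x \<in> carrier H. x [^]\<^bsub>H\<^esub> p = \<one>\<^bsub>H\<^esub>)"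

definition abelianization :: "('a, 'b) monoid_scheme \<Rightarrow> 'a set monoid" where
  "abelianization H = H Mod commutator_subgroup H"

definition top_group :: "('a, 'b) monoid_scheme \<Rightarrow> bool" where
  "top_group G \<longleftrightarrow> group G \<and> finite (carrier G) \<and>
     (\<forall>H. subgroup H G \<and> H \<subset> carrier G \<longrightarrow>
        order (abelianization (G\<lparr>carrier := H\<rparr>)) < order (abelianization G))"

definition special_p_group :: "nat \<Rightarrow> ('a, 'b) monoid_scheme \<Rightarrow> bool" where
  "special_p_group p P \<longleftrightarrow> p_group p P \<and>
     commutator_subgroup P = center P \<and> center P = frattini P"

end

theory Submission
  imports Defs
begin

definition comm :: "('a, 'b) monoid_scheme \<Rightarrow> 'a \<Rightarrow> 'a \<Rightarrow> 'a" where
  "comm G a b = a \<otimes>\<^bsub>G\<^esub> b \<otimes>\<^bsub>G\<^esub> inv\<^bsub>G\<^esub> a \<otimes>\<^bsub>G\<^esub> inv\<^bsub>G\<^esub> b"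

lemma exists_max_card:
  assumes "finite F" "F \<noteq> {}"
  shows "\<exists>T\<in>F. \<forall>T'\<in>F. card T' \<le> card T"
proof -
  let ?m = "Max (card ` F)"
  have "?m \<in> card ` F" using assms by simp
  then obtain T where "T \<in> F" "card T = ?m" by auto
  moreover have "\<forall>T'\<in>F. card T' \<le> ?m" using assms by simp
  ultimately show ?thesis by metis
qed

lemma prime_pow_lt_imp:
  assumes "Factorial_Ring.prime (p::nat)" "(p ^ a :: nat) < p ^ b"
  shows "p * p ^ a \<le> p ^ b"
proof -
  have "p > 1" using assms(1) prime_gt_1_nat by blast
  hence "a < b" using assms(2) by (metis not_less power_increasing_iff)
  hence "p ^ Suc a \<le> p ^ b" using \<open>p > 1\<close> by (intro power_increasing) auto
  thus ?thesis by simp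
qed

context group begin

lemma cancel1 [simp]: "x \<in> carrier G \<Longrightarrow> y \<in> carrier G \<Longrightarrow> x \<otimes> (inv x \<otimes> y) = y"
  by (simp add: m_assoc[symmetric])
lemma cancel2 [simp]: "x \<in> carrier G \<Longrightarrow> y \<in> carrier G \<Longrightarrow> inv x \<otimes> (x \<otimes> y) = y"
  by (simp add: m_assoc[symmetric])

lemma comm_closed [simp]: "a \<in> carrier G \<Longrightarrow> b \<in> carrier G \<Longrightarrow> comm G a b \<in> carrier G"
  by (simp add: comm_def)

lemma hall_witt:
  assumes "x \<in> carrier G" "y \<in> carrier G" "z \<in> carrier G"
  shows "(inv y \<otimes> comm G (comm G y (inv x)) (inv z) \<otimes> y) \<otimes>
         (inv z \<otimes> comm G (comm G z (inv y)) (inv x) \<otimes> z) \<otimes>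
         (inv x \<otimes> comm G (comm G x (inv z)) (inv y) \<otimes> x) = \<one>"
  using assms by (simp add: comm_def m_assoc inv_mult_group)

lemma comm_inv: "a \<in> carrier G \<Longrightarrow> b \<in> carrier G \<Longrightarrow> inv (comm G a b) = comm G b a"
  by (simp add: comm_def m_assoc inv_mult_group)

lemma comm_mult_left: "g \<in> carrier G \<Longrightarrow> h \<in> carrier G \<Longrightarrow> d \<in> carrier G \<Longrightarrow>
   comm G (g \<otimes> h) d = (g \<otimes> comm G h d \<otimes> inv g) \<otimes> comm G g d"
  by (simp add: comm_def m_assoc inv_mult_group)

lemma comm_inv_left: "g \<in> carrier G \<Longrightarrow> d \<in> carrier G \<Longrightarrow>
   comm G (inv g) d = inv g \<otimes> inv (comm G g d) \<otimes> g"
  by (simp add: comm_def m_assoc inv_mult_group)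

lemma comm_mult_right: "g \<in> carrier G \<Longrightarrow> d1 \<in> carrier G \<Longrightarrow> d2 \<in> carrier G \<Longrightarrow>
   comm G g (d1 \<otimes> d2) = comm G g d1 \<otimes> (d1 \<otimes> comm G g d2 \<otimes> inv d1)"
  by (simp add: comm_def m_assoc inv_mult_group)

lemma comm_inv_right: "g \<in> carrier G \<Longrightarrow> d \<in> carrier G \<Longrightarrow>
   comm G g (inv d) = inv d \<otimes> inv (comm G g d) \<otimes> d"
  by (simp add: comm_def m_assoc inv_mult_group)

lemma comm_one_right [simp]: "g \<in> carrier G \<Longrightarrow> comm G g \<one> = \<one>"
  by (simp add: comm_def)

lemma comm_one_left [simp]: "g \<in> carrier G \<Longrightarrow> comm G \<one> g = \<one>"
  by (simp add: comm_def)

lemma conj_eq_comm: "g \<in> carrier G \<Longrightarrow> d \<in> carrier G \<Longrightarrow> g \<otimes> d \<otimes> inv g = comm G g d \<otimes> d"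
  by (simp add: comm_def m_assoc)

lemma comm_central_one:
  assumes "a \<in> carrier G" "d \<in> carrier G" "\<forall>g\<in>carrier G. a \<otimes> g = g \<otimes> a"
  shows "comm G a d = \<one>" "comm G d a = \<one>"
proof -
  have "a \<otimes> d = d \<otimes> a" using assms by auto
  thus "comm G a d = \<one>" using assms unfolding comm_def
    by (metis inv_closed m_assoc m_closed r_inv r_one)
  thus "comm G d a = \<one>" using assms by (metis comm_inv inv_one)
qed

lemma comm_central:
  assumes "x \<in> carrier G" "y \<in> carrier G" "a \<in> carrier G" "b \<in> carrier G"
    and "\<forall>g\<in>carrier G. a \<otimes> g = g \<otimes> a" "\<forall>g\<in>carrier G. b \<otimes> g = g \<otimes> b"
  shows "comm G (x \<otimes> a) (y \<otimes> b) = comm G x y"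
proof -
  have "comm G (x \<otimes> a) (y \<otimes> b) = comm G x (y \<otimes> b)"
    using assms comm_mult_left[of x a "y \<otimes> b"] comm_central_one(1)[of a "y \<otimes> b"] by simp
  also have "\<dots> = comm G x y"
    using assms comm_mult_right[of x y b] comm_central_one(2)[of b x] by simp
  finally show ?thesis .
qed

end

context group begin

lemma normal_mult_subgroup:
  assumes "N \<lhd> G" "subgroup K G"
  shows "subgroup (N <#> K) G"
proof -
  interpret second_isomorphism_grp N G K
    using assms by (simp add: second_isomorphism_grp_def second_isomorphism_grp_axioms_def)
  show ?thesis by (rule normal_set_mult_subgroup)
qed

lemma set_mult_in: "x \<in> Q \<Longrightarrow> y \<in> W \<Longrightarrow> x \<otimes> y \<in> Q <#> W"
  unfolding set_mult_def by auto

lemma set_mult_subset_sub: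
  assumes "subgroup T G" "Q \<subseteq> T" "W \<subseteq> T" shows "Q <#> W \<subseteq> T"
  using assms unfolding set_mult_def by (auto intro: subgroup.m_closed)

lemma left_in_set_mult:
  assumes "subgroup K G" "Q \<subseteq> carrier G" shows "Q \<subseteq> Q <#> K"
proof
  fix x assume "x \<in> Q"
  hence "x \<otimes> \<one> \<in> Q <#> K" using assms by (intro set_mult_in) (auto intro: subgroup.one_closed)
  thus "x \<in> Q <#> K" using \<open>x \<in> Q\<close> assms by auto
qed

lemma gen_in_set_mult:
  assumes "subgroup Q G" "g \<in> carrier G" shows "g \<in> Q <#> generate G {g}"
proof -
  have "\<one> \<otimes> g \<in> Q <#> generate G {g}"
    using assms by (intro set_mult_in) (auto intro: subgroup.one_closed generate.incl)
  thus ?thesis using assms by simp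
qed

lemma sub_nat_pow_closed:
  assumes "subgroup H G" "h \<in> H" shows "h [^] (n::nat) \<in> H"
  using subgroup_int_pow_closed[OF assms, of "int n"] by (simp add: int_pow_int)

lemma ext_elem:
  assumes "subgroup Q G" "g \<in> carrier G" "g [^] (p::nat) \<in> Q" "p > 0"
    and "z \<in> Q <#> generate G {g}"
  shows "\<exists>x\<in>Q. \<exists>k<p. z = x \<otimes> g [^] k"
proof -
  obtain x h where xh: "x \<in> Q" "h \<in> generate G {g}" "z = x \<otimes> h"
    using assms(5) unfolding set_mult_def by auto
  obtain i :: int where i: "h = g [^] i" using xh(2) generate_pow[OF assms(2)] by auto
  define q where "q = i div int p"
  define r where "r = i mod int p"
  have ir: "i = int p * q + r" unfolding q_def r_def by simp
  have r0: "0 \<le> r" "r < int p" unfolding r_def using assms(4) by auto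
  have e1: "g [^] i = g [^] (int p * q) \<otimes> g [^] r"
    using int_pow_mult[OF assms(2), of "int p * q" r] ir by simp
  have e2: "g [^] (int p * q) = (g [^] (int p)) [^] q"
    using int_pow_pow[OF assms(2), of "int p" q] by simp
  have e3: "g [^] r = g [^] (nat r)" using r0 pow_nat[of r] by simp
  have e4: "g [^] (int p) = g [^] p" by (rule int_pow_int)
  have h2: "h = (g [^] p) [^] q \<otimes> g [^] (nat r)" using i e1 e2 e3 e4 by simp
  have xq: "(g [^] p) [^] q \<in> Q" using assms(1,3) subgroup_int_pow_closed by blast
  have xc: "x \<in> carrier G" by (rule subgroup.mem_carrier[OF assms(1) xh(1)])
  have xqc: "(g [^] p) [^] q \<in> carrier G" using assms(2) by simp
  have zz: "z = (x \<otimes> (g [^] p) [^] q) \<otimes> g [^] (nat r)"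
    using xh(3) h2 m_assoc[OF xc xqc, of "g [^] (nat r)"] assms(2) by simp
  have xm: "x \<otimes> (g [^] p) [^] q \<in> Q" by (rule subgroup.m_closed[OF assms(1) xh(1) xq])
  have nr: "nat r < p" using r0 by simp
  show ?thesis using zz xm nr by (intro bexI[of _ "x \<otimes> (g [^] p) [^] q"] exI[of _ "nat r"]) auto
qed

lemma ext_back:
  assumes "subgroup T G" "g \<in> carrier G" "g [^] (p::nat) \<in> T" "Factorial_Ring.prime p"
    "\<not> p dvd k" "g [^] (k::nat) \<in> T"
  shows "g \<in> T"
proof -
  have "coprime k p" using assms(4,5)
    by (metis coprime_commute prime_imp_coprime)
  hence g1: "gcd k p = 1" by simp
  have k0: "k \<noteq> 0" using assms(5) by (metis dvd_0_right)
  obtain a b where "k * a = p * b + gcd k p" using bezout_nat[OF k0] by blast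
  hence ab: "a * k = 1 + b * p" using g1 by (simp add: mult.commute)
  have e1: "g [^] (a * k) = g [^] (1::nat) \<otimes> g [^] (p * b)"
    using nat_pow_mult[OF assms(2), of 1 "p * b"] ab by (simp add: mult.commute)
  have "g [^] (a * k) = g \<otimes> (g [^] p) [^] b"
    using e1 nat_pow_pow[OF assms(2), of p b] assms(2) by simp
  moreover have "g [^] (a * k) \<in> T"
    using sub_nat_pow_closed[OF assms(1,6), of a] nat_pow_pow[OF assms(2), of k a]
    by (simp add: mult.commute)
  ultimately have m1: "g \<otimes> (g [^] p) [^] b \<in> T" by simp
  have m2: "(g [^] p) [^] b \<in> T" by (rule sub_nat_pow_closed[OF assms(1,3)])
  have "(g \<otimes> (g [^] p) [^] b) \<otimes> inv ((g [^] p) [^] b) \<in> T"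
    by (rule subgroup.m_closed[OF assms(1) m1 subgroup.m_inv_closed[OF assms(1) m2]])
  thus ?thesis using assms(2) by (simp add: m_assoc)
qed

lemma normal_of_derived:
  assumes "subgroup Q G" "derived G (carrier G) \<subseteq> Q"
  shows "Q \<lhd> G"
proof -
  have "\<forall>g\<in>carrier G. \<forall>h\<in>Q. g \<otimes> h \<otimes> inv g \<in> Q"
  proof (intro ballI)
    fix g h assume g: "g \<in> carrier G" and h: "h \<in> Q"
    have hc: "h \<in> carrier G" by (rule subgroup.mem_carrier[OF assms(1) h])
    have "comm G g h \<in> derived G (carrier G)"
      unfolding derived_def comm_def using g hc by (intro generate.incl) blast
    hence "comm G g h \<otimes> h \<in> Q" using assms(2) by (intro subgroup.m_closed[OF assms(1) _ h]) blast
    thus "g \<otimes> h \<otimes> inv g \<in> Q" using conj_eq_comm[OF g hc] by simp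
  qed
  thus ?thesis using assms(1) normal_inv_iff by blast
qed

lemma card_sub_dvd:
  assumes "subgroup H G" "subgroup K G" "H \<subseteq> K" "finite K"
  shows "card H dvd card K"
proof -
  interpret GK: group "G\<lparr>carrier := K\<rparr>" using assms(2) subgroup_imp_group by blast
  have "subgroup H (G\<lparr>carrier := K\<rparr>)" using subgroup_incl assms by blast
  from GK.lagrange[OF this] show ?thesis by (simp add: order_def) (metis dvd_triv_right)
qed

lemma card_sub_ppow:
  assumes "finite (carrier G)" "card (carrier G) = p ^ n" "Factorial_Ring.prime (p::nat)" "subgroup H G"
  shows "\<exists>k. card H = p ^ k"
proof -
  have "card H dvd p ^ n" using card_sub_dvd[OF assms(4) subgroup_self subgroup.subset[OF assms(4)]] assms(1,2)
    by simp
  thus ?thesis using divides_primepow_nat[OF assms(3)] by blast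
qed

lemma proper_sub_card:
  assumes "finite (carrier G)" "card (carrier G) = p ^ n" "Factorial_Ring.prime (p::nat)"
    "subgroup H G" "subgroup K G" "H \<subseteq> K" "H \<noteq> K"
  shows "p * card H \<le> card K"
proof -
  obtain a b where ab: "card H = p ^ a" "card K = p ^ b" using card_sub_ppow assms by metis
  have fK: "finite K" using assms(1) subgroup.subset[OF assms(5)] finite_subset by blast
  have "card H < card K" using psubset_card_mono[OF fK] assms(6,7) by blast
  thus ?thesis using ab prime_pow_lt_imp[OF assms(3)] by simp
qed

end

lemma fix_mod:
  assumes ga: "group_action G E \<phi>" and fE: "finite E" and XE: "Xs \<subseteq> E"
    and invX: "\<forall>g\<in>carrier G. \<forall>x\<in>Xs. \<phi> g x \<in> Xs"
    and ord: "order G = p ^ n" and pr: "Factorial_Ring.prime (p::nat)"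
  shows "card Xs mod p = card {x\<in>Xs. \<forall>g\<in>carrier G. \<phi> g x = x} mod p"
proof -
  let ?O = "orbit G \<phi>"
  let ?F = "{x\<in>Xs. \<forall>g\<in>carrier G. \<phi> g x = x}"
  have grp: "group G" using ga by (simp add: group_action_def group_hom_def)
  have one: "\<one>\<^bsub>G\<^esub> \<in> carrier G" using grp by (simp add: group.is_monoid monoid.one_closed)
  have p1: "p > 1" using pr prime_gt_1_nat by blast
  have fX: "finite Xs" using fE XE finite_subset by blast
  have sub: "?O x \<subseteq> Xs" if "x \<in> Xs" for x
    using that invX unfolding orbit_def by auto
  have self: "x \<in> ?O x" if "x \<in> Xs" for x
    using group_action.orbit_refl[OF ga] that XE by blast
  have inorbs: "?O x \<in> orbits G E \<phi>" if "x \<in> Xs" for x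
    using that XE unfolding orbits_def by blast
  have disj: "?O x = ?O y \<or> ?O x \<inter> ?O y = {}" if "x \<in> Xs" "y \<in> Xs" for x y
    using group_action.disjoint_union[OF ga inorbs[OF that(1)] inorbs[OF that(2)]] .
  have cardO: "\<exists>k. card (?O x) = p ^ k" if "x \<in> Xs" for x
  proof -
    have "card (?O x) * card (stabilizer G \<phi> x) = p ^ n"
      using group_action.orbit_stabilizer_theorem[OF ga] that XE ord by auto
    hence "card (?O x) dvd p ^ n" by (metis dvd_triv_left)
    thus ?thesis using divides_primepow_nat[OF pr] by blast
  qed
  define Os where "Os = ?O ` Xs"
  have fOs: "finite Os" unfolding Os_def using fX by simp
  have UOs: "\<Union>Os = Xs" unfolding Os_def using sub self by blast
  have pw: "pairwise disjnt Os"
    unfolding pairwise_def disjnt_def Os_def using disj by blast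
  have finO: "finite ob" if "ob \<in> Os" for ob using that sub fX finite_subset unfolding Os_def by blast
  have "card Xs = sum card Os" using card_Union_disjoint[OF pw finO] UOs by simp
  hence "card Xs mod p = (\<Sum>ob\<in>Os. card ob mod p) mod p" by (simp add: mod_sum_eq)
  also have "(\<Sum>ob\<in>Os. card ob mod p) = (\<Sum>ob\<in>Os. if card ob = 1 then 1 else 0)"
  proof (rule sum.cong)
    fix ob assume "ob \<in> Os"
    then obtain k where k: "card ob = p ^ k" using cardO unfolding Os_def by blast
    show "card ob mod p = (if card ob = 1 then 1 else 0)"
    proof (cases k)
      case 0 thus ?thesis using k p1 by simp
    next
      case (Suc j) thus ?thesis using k p1 by simp
    qed
  qed simp
  also have "\<dots> = card {ob\<in>Os. card ob = 1}"
    using sum.inter_filter[OF fOs, of "\<lambda>_. 1::nat" "\<lambda>ob. card ob = 1"] by simp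
  also have "card {ob\<in>Os. card ob = 1} = card ?F"
  proof -
    have fixO: "?O x = {x}" if "x \<in> ?F" for x
    proof -
      have "?O x = {\<phi> g x | g. g \<in> carrier G}" unfolding orbit_def by simp
      also have "\<dots> = {x}" using that one by (auto intro!: exI[of _ "\<one>\<^bsub>G\<^esub>"])
      finally show ?thesis .
    qed
    have "bij_betw ?O ?F {ob\<in>Os. card ob = 1}"
    proof (rule bij_betwI')
      fix x y assume "x \<in> ?F" "y \<in> ?F"
      thus "(?O x = ?O y) = (x = y)" using fixO by auto
    next
      fix x assume "x \<in> ?F"
      thus "?O x \<in> {ob\<in>Os. card ob = 1}" using fixO unfolding Os_def by auto
    next
      fix ob assume "ob \<in> {ob\<in>Os. card ob = 1}"
      then obtain x where x: "x \<in> Xs" "ob = ?O x" "card (?O x) = 1" unfolding Os_def by auto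
      have "?O x = {x}" using x(3) self[OF x(1)] by (metis card_1_singletonE singletonD)
      hence "\<forall>g\<in>carrier G. \<phi> g x = x" unfolding orbit_def by blast
      thus "\<exists>x\<in>?F. ob = ?O x" using x by blast
    qed
    thus ?thesis by (simp add: bij_betw_same_card)
  qed
  finally show ?thesis by simp
qed

context group begin

lemma conj_coset:
  assumes "N \<lhd> G" "g \<in> carrier G" "d \<in> carrier G"
  shows "g <# (N #> d) #> inv g = N #> (g \<otimes> d \<otimes> inv g)"
proof -
  have sN: "subgroup N G" using assms(1) normal_imp_subgroup by blast
  have Nc: "N \<subseteq> carrier G" using subgroup.subset[OF sN] .
  have cl: "\<And>x h. x \<in> carrier G \<Longrightarrow> h \<in> N \<Longrightarrow> x \<otimes> h \<otimes> inv x \<in> N"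
    using assms(1) normal_inv_iff by blast
  show ?thesis
  proof
    show "g <# (N #> d) #> inv g \<subseteq> N #> (g \<otimes> d \<otimes> inv g)"
    proof
      fix y assume "y \<in> g <# (N #> d) #> inv g"
      then obtain n where n: "n \<in> N" "y = g \<otimes> (n \<otimes> d) \<otimes> inv g"
        unfolding l_coset_def r_coset_def by auto
      have nc: "n \<in> carrier G" using n(1) Nc by blast
      have "y = (g \<otimes> n \<otimes> inv g) \<otimes> (g \<otimes> d \<otimes> inv g)"
        using n(2) nc assms(2,3) by (simp add: m_assoc)
      moreover have "g \<otimes> n \<otimes> inv g \<in> N" using cl[OF assms(2) n(1)] .
      ultimately show "y \<in> N #> (g \<otimes> d \<otimes> inv g)" unfolding r_coset_def by blast
    qed
  next
    show "N #> (g \<otimes> d \<otimes> inv g) \<subseteq> g <# (N #> d) #> inv g"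
    proof
      fix y assume "y \<in> N #> (g \<otimes> d \<otimes> inv g)"
      then obtain n where n: "n \<in> N" "y = n \<otimes> (g \<otimes> d \<otimes> inv g)"
        unfolding r_coset_def by auto
      have nc: "n \<in> carrier G" using n(1) Nc by blast
      have m: "inv g \<otimes> n \<otimes> inv (inv g) \<in> N" using cl[OF inv_closed[OF assms(2)] n(1)] .
      have "y = g \<otimes> ((inv g \<otimes> n \<otimes> inv (inv g)) \<otimes> d) \<otimes> inv g"
        using n(2) nc assms(2,3) by (simp add: m_assoc)
      thus "y \<in> g <# (N #> d) #> inv g" using m unfolding l_coset_def r_coset_def by blast
    qed
  qed
qed

lemma central_mod_exists:
  assumes fin: "finite (carrier G)" and cG: "card (carrier G) = p ^ n" and pr: "Factorial_Ring.prime p"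
    and nN: "N \<lhd> G" and sD: "subgroup D G" and nD: "\<forall>g\<in>carrier G. \<forall>d\<in>D. g \<otimes> d \<otimes> inv g \<in> D"
    and ND: "N \<subseteq> D" "N \<noteq> D"
  shows "\<exists>d\<in>D. d \<notin> N \<and> (\<forall>g\<in>carrier G. comm G g d \<in> N)"
proof -
  have sN: "subgroup N G" using nN normal_imp_subgroup by blast
  have Dc: "D \<subseteq> carrier G" using subgroup.subset[OF sD] .
  let ?E = "{H. H \<subseteq> carrier G}"
  let ?phi = "\<lambda>g. \<lambda>H \<in> ?E. g <# H #> inv g"
  have ga: "group_action G ?E ?phi" by (rule action_by_conjugation_on_power_set)
  have fE: "finite ?E" using fin by simp
  define Xs where "Xs = (\<lambda>d. N #> d) ` D"
  have XE: "Xs \<subseteq> ?E" unfolding Xs_def using Dc r_coset_subset_G[OF subgroup.subset[OF sN]] by blast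
  have phiX: "?phi g (N #> d) = N #> (g \<otimes> d \<otimes> inv g)" if "g \<in> carrier G" "d \<in> D" for g d
  proof -
    have "N #> d \<in> ?E" using that Dc r_coset_subset_G[OF subgroup.subset[OF sN]] by blast
    thus ?thesis using conj_coset[OF nN that(1)] that Dc by auto
  qed
  have invX: "\<forall>g\<in>carrier G. \<forall>x\<in>Xs. ?phi g x \<in> Xs"
    unfolding Xs_def using phiX nD by blast
  have ord: "order G = p ^ n" using cG by (simp add: order_def)
  have fm: "card Xs mod p = card {x\<in>Xs. \<forall>g\<in>carrier G. ?phi g x = x} mod p"
    by (rule fix_mod[OF ga fE XE invX ord pr])
  interpret GD: group "G\<lparr>carrier := D\<rparr>" using sD subgroup_imp_group by blast
  have sND: "subgroup N (G\<lparr>carrier := D\<rparr>)" using subgroup_incl[OF sN sD ND(1)] .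
  have "rcosets\<^bsub>G\<lparr>carrier := D\<rparr>\<^esub> N = Xs"
    unfolding RCOSETS_def Xs_def r_coset_def by auto
  hence lag: "card Xs * card N = card D" using GD.lagrange[OF sND] by (simp add: order_def)
  obtain a where a: "card D = p ^ a" using card_sub_ppow[OF fin cG pr sD] by blast
  have "card Xs dvd p ^ a" using lag a by (metis dvd_triv_left)
  then obtain c where c: "card Xs = p ^ c" using divides_primepow_nat[OF pr] by blast
  have fD: "finite D" using fin Dc finite_subset by blast
  have "card N \<noteq> card D" using ND fD card_subset_eq by blast
  hence "c \<noteq> 0" using lag c by (metis power_0 mult_1)
  hence "p dvd card Xs" using c by simp
  hence pF: "p dvd card {x\<in>Xs. \<forall>g\<in>carrier G. ?phi g x = x}" using fm by (simp add: mod_eq_0_iff_dvd[symmetric])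
  have one: "\<one> \<in> D" using subgroup.one_closed[OF sD] .
  have N1: "N #> \<one> = N" using coset_mult_one subgroup.subset[OF sN] by blast
  have NF: "N \<in> {x\<in>Xs. \<forall>g\<in>carrier G. ?phi g x = x}"
  proof -
    have "N \<in> Xs" unfolding Xs_def using one N1 by force
    moreover have "?phi g N = N" if "g \<in> carrier G" for g
      using phiX[OF that one] N1 that by simp
    ultimately show ?thesis by blast
  qed
  have fX: "finite Xs" unfolding Xs_def using fD by simp
  define Fx where "Fx = {x\<in>Xs. \<forall>g\<in>carrier G. ?phi g x = x}"
  have fFx: "finite Fx" unfolding Fx_def using fX by simp
  have "card Fx \<noteq> 0" using NF fFx card_0_eq unfolding Fx_def[symmetric] by blast
  hence "card Fx \<ge> 2"
    using pF prime_ge_2_nat[OF pr] dvd_imp_le unfolding Fx_def[symmetric] by (metis le_trans neq0_conv)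
  hence "\<not> Fx \<subseteq> {N}"
    using card_mono[of "{N}" Fx] by auto
  hence "\<exists>F. F \<in> Xs \<and> F \<noteq> N \<and> (\<forall>g\<in>carrier G. ?phi g F = F)" unfolding Fx_def by blast
  then obtain F where F: "F \<in> Xs" "F \<noteq> N" "\<forall>g\<in>carrier G. ?phi g F = F" by metis
  then obtain d where d: "d \<in> D" "F = N #> d" unfolding Xs_def by blast
  have dc: "d \<in> carrier G" using d(1) Dc by blast
  have dN: "d \<notin> N" using F(2) d(2) subgroup.rcos_const[OF sN is_group] by blast
  have "comm G g d \<in> N" if g: "g \<in> carrier G" for g
  proof -
    have e: "N #> (g \<otimes> d \<otimes> inv g) = N #> d" using F(3) g phiX[OF g d(1)] d(2) by simp
    have gd: "g \<otimes> d \<otimes> inv g \<in> carrier G" using g dc by simp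
    have "g \<otimes> d \<otimes> inv g \<in> N #> d" using rcos_self[OF gd sN] e by simp
    hence "(g \<otimes> d \<otimes> inv g) \<otimes> inv d \<in> N" using subgroup.rcos_module_imp[OF sN is_group dc] by blast
    thus ?thesis by (simp add: comm_def)
  qed
  thus ?thesis using d(1) dN by blast
qed

end

definition cenm :: "('a, 'b) monoid_scheme \<Rightarrow> 'a set \<Rightarrow> 'a set \<Rightarrow> 'a set" where
  "cenm G N K = {d \<in> carrier G. \<forall>g\<in>K. comm G g d \<in> N}"

definition cgm :: "('a, 'b) monoid_scheme \<Rightarrow> 'a set \<Rightarrow> 'a set \<Rightarrow> 'a set" where
  "cgm G N K = {g \<in> carrier G. \<forall>d\<in>K. comm G g d \<in> N}"

context group begin

lemma normal_conj:
  assumes "N \<lhd> G" "x \<in> carrier G" "h \<in> N" shows "x \<otimes> h \<otimes> inv x \<in> N"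
  using assms normal_inv_iff by blast

lemma cenm_subgroup:
  assumes nN: "N \<lhd> G" and K: "K \<subseteq> carrier G"
  shows "subgroup (cenm G N K) G"
proof (rule subgroupI)
  have sN: "subgroup N G" using nN normal_imp_subgroup by blast
  have Nc: "N \<subseteq> carrier G" using subgroup.subset[OF sN] .
  show "cenm G N K \<subseteq> carrier G" unfolding cenm_def by blast
  have "\<one> \<in> cenm G N K" unfolding cenm_def using K subgroup.one_closed[OF sN] by auto
  thus "cenm G N K \<noteq> {}" by blast
  fix a assume a: "a \<in> cenm G N K"
  have ac: "a \<in> carrier G" using a unfolding cenm_def by blast
  have "comm G g (inv a) \<in> N" if g: "g \<in> K" for g
  proof -
    have gc: "g \<in> carrier G" using g K by blast
    have c: "comm G g a \<in> N" using a g unfolding cenm_def by blast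
    have "inv a \<otimes> inv (comm G g a) \<otimes> inv (inv a) \<in> N"
      by (rule normal_conj[OF nN inv_closed[OF ac] subgroup.m_inv_closed[OF sN c]])
    thus ?thesis using comm_inv_right[OF gc ac] ac by simp
  qed
  thus "inv a \<in> cenm G N K" using ac unfolding cenm_def by blast
next
  have sN: "subgroup N G" using nN normal_imp_subgroup by blast
  fix a b assume a: "a \<in> cenm G N K" and b: "b \<in> cenm G N K"
  have ac: "a \<in> carrier G" using a unfolding cenm_def by blast
  have bc: "b \<in> carrier G" using b unfolding cenm_def by blast
  have "comm G g (a \<otimes> b) \<in> N" if g: "g \<in> K" for g
  proof -
    have gc: "g \<in> carrier G" using g K by blast
    have c1: "comm G g a \<in> N" using a g unfolding cenm_def by blast
    have c2: "comm G g b \<in> N" using b g unfolding cenm_def by blast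
    have "comm G g a \<otimes> (a \<otimes> comm G g b \<otimes> inv a) \<in> N"
      by (rule subgroup.m_closed[OF sN c1 normal_conj[OF nN ac c2]])
    thus ?thesis using comm_mult_right[OF gc ac bc] by simp
  qed
  thus "a \<otimes> b \<in> cenm G N K" using ac bc unfolding cenm_def by blast
qed

lemma cgm_subgroup:
  assumes nN: "N \<lhd> G" and K: "K \<subseteq> carrier G"
  shows "subgroup (cgm G N K) G"
proof (rule subgroupI)
  have sN: "subgroup N G" using nN normal_imp_subgroup by blast
  show "cgm G N K \<subseteq> carrier G" unfolding cgm_def by blast
  have "\<one> \<in> cgm G N K" unfolding cgm_def using K subgroup.one_closed[OF sN] by auto
  thus "cgm G N K \<noteq> {}" by blast
  fix a assume a: "a \<in> cgm G N K"
  have ac: "a \<in> carrier G" using a unfolding cgm_def by blast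
  have "comm G (inv a) d \<in> N" if d: "d \<in> K" for d
  proof -
    have dc: "d \<in> carrier G" using d K by blast
    have c: "comm G a d \<in> N" using a d unfolding cgm_def by blast
    have "inv a \<otimes> inv (comm G a d) \<otimes> inv (inv a) \<in> N"
      by (rule normal_conj[OF nN inv_closed[OF ac] subgroup.m_inv_closed[OF sN c]])
    thus ?thesis using comm_inv_left[OF ac dc] ac by simp
  qed
  thus "inv a \<in> cgm G N K" using ac unfolding cgm_def by blast
next
  have sN: "subgroup N G" using nN normal_imp_subgroup by blast
  fix a b assume a: "a \<in> cgm G N K" and b: "b \<in> cgm G N K"
  have ac: "a \<in> carrier G" using a unfolding cgm_def by blast
  have bc: "b \<in> carrier G" using b unfolding cgm_def by blast
  have "comm G (a \<otimes> b) d \<in> N" if d: "d \<in> K" for d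
  proof -
    have dc: "d \<in> carrier G" using d K by blast
    have c1: "comm G a d \<in> N" using a d unfolding cgm_def by blast
    have c2: "comm G b d \<in> N" using b d unfolding cgm_def by blast
    have "(a \<otimes> comm G b d \<otimes> inv a) \<otimes> comm G a d \<in> N"
      by (rule subgroup.m_closed[OF sN normal_conj[OF nN ac c2] c1])
    thus ?thesis using comm_mult_left[OF ac bc dc] by simp
  qed
  thus "a \<otimes> b \<in> cgm G N K" using ac bc unfolding cgm_def by blast
qed

lemma power_trick:
  assumes fin: "finite (carrier G)" and cG: "card (carrier G) = p ^ n"
    and sN: "subgroup N G" and sF: "subgroup F G" and d: "d \<in> F" "d \<notin> N"
  shows "\<exists>u\<in>F. u \<notin> N \<and> u [^] p \<in> N"
proof -
  have dc: "d \<in> carrier G" using d(1) subgroup.subset[OF sF] by blast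
  let ?P = "\<lambda>m. d [^] (p ^ m) \<in> N"
  have "d [^] order G = \<one>" using pow_order_eq_1[OF dc] .
  hence Pn: "?P n" using cG subgroup.one_closed[OF sN] by (simp add: order_def)
  define m where "m = (LEAST m. ?P m)"
  have Pm: "?P m" unfolding m_def using LeastI[of ?P n, OF Pn] .
  have m0: "m \<noteq> 0"
  proof
    assume "m = 0"
    hence "d [^] (1::nat) \<in> N" using Pm by simp
    thus False using d(2) dc by simp
  qed
  then obtain k where k: "m = Suc k" by (metis not0_implies_Suc)
  have nPk: "\<not> ?P k" using not_less_Least[of k ?P] k unfolding m_def by simp
  have "(d [^] (p ^ k)) [^] p = d [^] (p ^ m)" using dc k by (simp add: nat_pow_pow mult.commute)
  moreover have "d [^] (p ^ k) \<in> F" using sub_nat_pow_closed[OF sF d(1)] .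
  ultimately show ?thesis using nPk Pm by metis
qed

lemma fiber_identity:
  assumes "a \<in> carrier G" "w \<in> carrier G" "n1 \<in> carrier G" "n2 \<in> carrier G"
  shows "a \<otimes> inv (n2 \<otimes> w) \<otimes> inv a \<otimes> (n1 \<otimes> w) =
         comm G a (inv w) \<otimes> (inv w \<otimes> ((a \<otimes> inv n2 \<otimes> inv a) \<otimes> n1) \<otimes> inv (inv w))"
  using assms by (simp add: comm_def m_assoc inv_mult_group)

lemma comm_quot_identity:
  assumes "g \<in> carrier G" "h \<in> carrier G" "y \<in> carrier G"
  shows "comm G (g \<otimes> inv h) y = (g \<otimes> inv h) \<otimes> inv (comm G h y) \<otimes> inv (g \<otimes> inv h) \<otimes> comm G g y"
  using assms by (simp add: comm_def m_assoc inv_mult_group)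

lemma fiber_count:
  assumes fin: "finite (carrier G)" and nN: "N \<lhd> G" and uc: "u \<in> carrier G"
    and hu: "\<forall>g\<in>carrier G. comm G g u \<in> N" and yc: "y \<in> carrier G"
    and sC0: "subgroup C0 G"
    and hN': "\<forall>g\<in>C0. \<exists>x\<in>N. \<exists>j<p. comm G g y = x \<otimes> u [^] j"
  shows "card C0 \<le> p * card {g\<in>C0. comm G g y \<in> N}"
proof -
  have sN: "subgroup N G" using nN normal_imp_subgroup by blast
  let ?C1 = "{g\<in>C0. comm G g y \<in> N}"
  define F where "F j = {g\<in>C0. comm G g y \<otimes> inv (u [^] (j::nat)) \<in> N}" for j
  have C0c: "C0 \<subseteq> carrier G" using subgroup.subset[OF sC0] .
  have fC0: "finite C0" using fin C0c finite_subset by blast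
  have cov: "C0 \<subseteq> (\<Union>j\<in>{..<p}. F j)"
  proof
    fix g assume g: "g \<in> C0"
    then obtain x j where xj: "x \<in> N" "j < p" "comm G g y = x \<otimes> u [^] j" using hN' by blast
    have xc: "x \<in> carrier G" using xj(1) subgroup.subset[OF sN] by blast
    have "comm G g y \<otimes> inv (u [^] j) = x" using xj(3) xc uc by (simp add: m_assoc)
    hence "g \<in> F j" using g xj(1) unfolding F_def by simp
    thus "g \<in> (\<Union>j\<in>{..<p}. F j)" using xj(2) by blast
  qed
  have uz: "u \<in> cenm G N (carrier G)" unfolding cenm_def using uc hu by blast
  have sZ: "subgroup (cenm G N (carrier G)) G" using cenm_subgroup[OF nN] by blast
  have bound: "card (F j) \<le> card ?C1" for j
  proof (cases "F j = {}")
    case True thus ?thesis by simp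
  next
    case False
    then obtain h where h: "h \<in> F j" by blast
    have hc: "h \<in> carrier G" using h C0c unfolding F_def by blast
    let ?w = "u [^] j"
    have wz: "?w \<in> cenm G N (carrier G)" using sub_nat_pow_closed[OF sZ uz] .
    have iwz: "inv ?w \<in> cenm G N (carrier G)" using subgroup.m_inv_closed[OF sZ wz] .
    have wc: "?w \<in> carrier G" using uc by simp
    have inj: "inj_on (\<lambda>g. g \<otimes> inv h) (F j)"
    proof (rule inj_onI)
      fix x1 x2 assume x: "x1 \<in> F j" "x2 \<in> F j" "x1 \<otimes> inv h = x2 \<otimes> inv h"
      have "x1 \<in> carrier G" "x2 \<in> carrier G" using x(1,2) C0c unfolding F_def by auto
      thus "x1 = x2" using x(3) hc by (metis inv_closed right_cancel)
    qed
    have img: "(\<lambda>g. g \<otimes> inv h) ` (F j) \<subseteq> ?C1"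
    proof
      fix z assume "z \<in> (\<lambda>g. g \<otimes> inv h) ` (F j)"
      then obtain g where g: "g \<in> F j" "z = g \<otimes> inv h" by blast
      have gC0: "g \<in> C0" using g(1) unfolding F_def by blast
      have hC0: "h \<in> C0" using h unfolding F_def by blast
      have gc: "g \<in> carrier G" using gC0 C0c by blast
      have zC0: "z \<in> C0" using g(2) subgroup.m_closed[OF sC0 gC0 subgroup.m_inv_closed[OF sC0 hC0]] by simp
      define a where "a = g \<otimes> inv h"
      define n1 where "n1 = comm G g y \<otimes> inv ?w"
      define n2 where "n2 = comm G h y \<otimes> inv ?w"
      have ac: "a \<in> carrier G" unfolding a_def using gc hc by simp
      have n1N: "n1 \<in> N" using g(1) unfolding F_def n1_def by blast
      have n2N: "n2 \<in> N" using h unfolding F_def n2_def by blast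
      have n1c: "n1 \<in> carrier G" using n1N subgroup.subset[OF sN] by blast
      have n2c: "n2 \<in> carrier G" using n2N subgroup.subset[OF sN] by blast
      have e1: "comm G g y = n1 \<otimes> ?w" unfolding n1_def using gc yc wc by (simp add: m_assoc)
      have e2: "comm G h y = n2 \<otimes> ?w" unfolding n2_def using hc yc wc by (simp add: m_assoc)
      have "comm G z y = a \<otimes> inv (n2 \<otimes> ?w) \<otimes> inv a \<otimes> (n1 \<otimes> ?w)"
        using comm_quot_identity[OF gc hc yc] e1 e2 g(2) unfolding a_def by simp
      also have "\<dots> = comm G a (inv ?w) \<otimes> (inv ?w \<otimes> ((a \<otimes> inv n2 \<otimes> inv a) \<otimes> n1) \<otimes> inv (inv ?w))"
        by (rule fiber_identity[OF ac wc n1c n2c])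
      finally have ez: "comm G z y = \<dots>" .
      have m1: "comm G a (inv ?w) \<in> N" using iwz ac unfolding cenm_def by blast
      have m2: "(a \<otimes> inv n2 \<otimes> inv a) \<otimes> n1 \<in> N"
        by (rule subgroup.m_closed[OF sN normal_conj[OF nN ac subgroup.m_inv_closed[OF sN n2N]] n1N])
      have m3: "inv ?w \<otimes> ((a \<otimes> inv n2 \<otimes> inv a) \<otimes> n1) \<otimes> inv (inv ?w) \<in> N"
        by (rule normal_conj[OF nN inv_closed[OF wc] m2])
      have "comm G z y \<in> N" using ez subgroup.m_closed[OF sN m1 m3] by simp
      thus "z \<in> ?C1" using zC0 by blast
    qed
    have "finite ?C1" using fC0 by simp
    thus ?thesis using card_inj_on_le[OF inj img] by blast
  qed
  have "card C0 \<le> card (\<Union>j\<in>{..<p}. F j)"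
    by (rule card_mono[OF _ cov]) (use fC0 in \<open>auto simp: F_def\<close>)
  also have "\<dots> \<le> (\<Sum>j\<in>{..<p}. card (F j))" by (rule card_UN_le) simp
  also have "\<dots> \<le> (\<Sum>j\<in>{..<p}. card ?C1)" by (rule sum_mono) (rule bound)
  also have "\<dots> = p * card ?C1" by simp
  finally show ?thesis .
qed

end

context group begin

lemma abel_order_G:
  shows "order (abelianization G) * card (derived G (carrier G)) = card (carrier G)"
proof -
  have s: "subgroup (derived G (carrier G)) G" using derived_is_subgroup by simp
  have "order (abelianization G) = card (rcosets (derived G (carrier G)))"
    unfolding abelianization_def commutator_subgroup_def order_def FactGroup_def by simp
  thus ?thesis using lagrange[OF s] by (simp add: order_def)
qed

lemma abel_order_sub:
  assumes sH: "subgroup H G"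
  shows "order (abelianization (G\<lparr>carrier := H\<rparr>)) * card (derived G H) = card H"
proof -
  interpret GH: group "G\<lparr>carrier := H\<rparr>" using sH subgroup_imp_group by blast
  have eq: "derived (G\<lparr>carrier := H\<rparr>) H = derived G H"
    using derived_consistent[OF subset_refl sH] .
  have s: "subgroup (derived G H) (G\<lparr>carrier := H\<rparr>)"
    using GH.derived_is_subgroup[of H] eq by simp
  have "order (abelianization (G\<lparr>carrier := H\<rparr>)) = card (rcosets\<^bsub>G\<lparr>carrier := H\<rparr>\<^esub> (derived G H))"
    unfolding abelianization_def commutator_subgroup_def order_def FactGroup_def using eq by simp
  thus ?thesis using GH.lagrange[OF s] by (simp add: order_def)
qed

end

context group begin

lemma comm_in_derived:
  "g \<in> carrier G \<Longrightarrow> d \<in> carrier G \<Longrightarrow> comm G g d \<in> derived G (carrier G)"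
  unfolding derived_def comm_def by (intro generate.incl) blast

lemma derived_central:
  assumes fin: "finite (carrier G)" and cG: "card (carrier G) = p ^ n" and pr: "Factorial_Ring.prime p"
    and top: "\<forall>H. subgroup H G \<and> H \<subset> carrier G \<longrightarrow>
                 order (abelianization (G\<lparr>carrier := H\<rparr>)) < order (abelianization G)"
  shows "\<forall>d\<in>derived G (carrier G). \<forall>g\<in>carrier G. comm G g d = \<one>"
proof (rule ccontr)
  define D where "D = derived G (carrier G)"
  have sD: "subgroup D G" unfolding D_def using derived_is_subgroup by simp
  have nD: "D \<lhd> G" unfolding D_def using derived_self_is_normal .
  have Dc: "D \<subseteq> carrier G" using subgroup.subset[OF sD] .
  have commD: "\<And>g d. g \<in> carrier G \<Longrightarrow> d \<in> carrier G \<Longrightarrow> comm G g d \<in> D"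
    unfolding D_def by (rule comm_in_derived)
  define bad where "bad N \<longleftrightarrow> (\<exists>d\<in>D. \<exists>g\<in>carrier G. comm G g d \<notin> N)" for N
  assume "\<not> (\<forall>d\<in>derived G (carrier G). \<forall>g\<in>carrier G. comm G g d = \<one>)"
  hence bad1: "bad {\<one>}" unfolding bad_def D_def by blast
  define Fam where "Fam = {N. N \<lhd> G \<and> N \<subseteq> D \<and> bad N}"
  have "Fam \<subseteq> Pow (carrier G)" unfolding Fam_def using Dc by blast
  hence fFam: "finite Fam" using finite_subset fin by (metis finite_Pow_iff)
  have "{\<one>} \<subseteq> D" using subgroup.one_closed[OF sD] by simp
  hence "{\<one>} \<in> Fam" unfolding Fam_def using one_is_normal bad1 by simp
  then obtain N where NF: "N \<in> Fam" and Nmax: "\<forall>T\<in>Fam. card T \<le> card N"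
    using exists_max_card[OF fFam] by blast
  have nN: "N \<lhd> G" and ND: "N \<subseteq> D" and badN: "bad N" using NF unfolding Fam_def by auto
  have sN: "subgroup N G" using nN normal_imp_subgroup by blast
  have Nc: "N \<subseteq> carrier G" using subgroup.subset[OF sN] .
  have NneD: "N \<noteq> D"
  proof
    assume "N = D" thus False using badN commD Dc unfolding bad_def by blast
  qed
  have nD': "\<forall>g\<in>carrier G. \<forall>d\<in>D. g \<otimes> d \<otimes> inv g \<in> D" using normal_conj[OF nD] by blast
  obtain d0 where d0: "d0 \<in> D" "d0 \<notin> N" "\<forall>g\<in>carrier G. comm G g d0 \<in> N"
    using central_mod_exists[OF fin cG pr nN sD nD' ND NneD] by blast
  define Z0 where "Z0 = D \<inter> cenm G N (carrier G)"
  have sZ0: "subgroup Z0 G" unfolding Z0_def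
    using subgroups_Inter_pair[OF sD cenm_subgroup[OF nN subset_refl]] .
  have d0Z: "d0 \<in> Z0" unfolding Z0_def cenm_def using d0 Dc by blast
  obtain u where u: "u \<in> Z0" "u \<notin> N" "u [^] p \<in> N"
    using power_trick[OF fin cG sN sZ0 d0Z d0(2)] by blast
  have uc: "u \<in> carrier G" using u(1) subgroup.subset[OF sZ0] by blast
  have hu: "\<forall>g\<in>carrier G. comm G g u \<in> N" using u(1) unfolding Z0_def cenm_def by blast
  have NZ0: "N \<subseteq> Z0"
  proof
    fix x assume x: "x \<in> N"
    have xc: "x \<in> carrier G" using x Nc by blast
    have "comm G g x \<in> N" if g: "g \<in> carrier G" for g
    proof -
      have "(g \<otimes> x \<otimes> inv g) \<otimes> inv x \<in> N"
        by (rule subgroup.m_closed[OF sN normal_conj[OF nN g x] subgroup.m_inv_closed[OF sN x]])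
      thus ?thesis by (simp add: comm_def)
    qed
    thus "x \<in> Z0" unfolding Z0_def cenm_def using x ND xc by blast
  qed
  define N' where "N' = N <#> generate G {u}"
  have sgen: "subgroup (generate G {u}) G" using generate_is_subgroup uc by simp
  have sN': "subgroup N' G" unfolding N'_def by (rule normal_mult_subgroup[OF nN sgen])
  have genZ0: "generate G {u} \<subseteq> Z0" using generate_subgroup_incl[OF _ sZ0] u(1) by blast
  have N'Z0: "N' \<subseteq> Z0" unfolding N'_def by (rule set_mult_subset_sub[OF sZ0 NZ0 genZ0])
  have NN': "N \<subseteq> N'" unfolding N'_def by (rule left_in_set_mult[OF sgen Nc])
  have uN': "u \<in> N'" unfolding N'_def by (rule gen_in_set_mult[OF sN uc])
  have nN': "N' \<lhd> G"
  proof -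
    have "g \<otimes> w \<otimes> inv g \<in> N'" if g: "g \<in> carrier G" and w: "w \<in> N'" for g w
    proof -
      have wZ: "w \<in> Z0" using w N'Z0 by blast
      have wc: "w \<in> carrier G" using wZ subgroup.subset[OF sZ0] by blast
      have "comm G g w \<in> N" using wZ g unfolding Z0_def cenm_def by blast
      hence "comm G g w \<in> N'" using NN' by blast
      hence "comm G g w \<otimes> w \<in> N'" by (rule subgroup.m_closed[OF sN' _ w])
      thus ?thesis using conj_eq_comm[OF g wc] by simp
    qed
    thus ?thesis unfolding normal_inv_iff using sN' by blast
  qed
  have N'D: "N' \<subseteq> D" using N'Z0 unfolding Z0_def by blast
  have fN': "finite N'" by (rule finite_subset[OF _ fin]) (use N'D Dc in blast)
  have "card N < card N'" using psubset_card_mono[OF fN'] NN' uN' u(2) by blast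
  hence "N' \<notin> Fam" using Nmax by fastforce
  hence good': "\<forall>d\<in>D. \<forall>g\<in>carrier G. comm G g d \<in> N'"
    unfolding Fam_def bad_def using nN' N'D by blast
  have p0: "p > 0" using pr prime_gt_0_nat by blast
  have N'elem: "\<forall>w\<in>N'. \<exists>x\<in>N. \<exists>j<p. w = x \<otimes> u [^] j"
    unfolding N'_def using ext_elem[OF sN uc u(3) p0] by blast
  have Z0D: "Z0 \<subseteq> D" unfolding Z0_def by blast
  have Z0c: "Z0 \<subseteq> carrier G" using Z0D Dc by blast
  have claim2: "\<forall>K. card K = m \<longrightarrow> subgroup K G \<and> Z0 \<subseteq> K \<and> K \<subseteq> D \<longrightarrow>
      card (carrier G) * card Z0 \<le> card K * card (cgm G N K)" for m
  proof (induction m rule: less_induct)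
    case (less m)
    show ?case
    proof (intro allI impI)
      fix K assume cK: "card K = m" and K: "subgroup K G \<and> Z0 \<subseteq> K \<and> K \<subseteq> D"
      have sK: "subgroup K G" and Z0K: "Z0 \<subseteq> K" and KD: "K \<subseteq> D" using K by auto
      have Kc: "K \<subseteq> carrier G" using KD Dc by blast
      show "card (carrier G) * card Z0 \<le> card K * card (cgm G N K)"
      proof (cases "K = Z0")
        case True
        have "cgm G N K = carrier G"
          unfolding cgm_def True Z0_def cenm_def by blast
        thus ?thesis using True by simp
      next
        case False
        define Fam2 where "Fam2 = {T. subgroup T G \<and> Z0 \<subseteq> T \<and> T \<subseteq> K \<and> T \<noteq> K}"
        have "Fam2 \<subseteq> Pow (carrier G)" unfolding Fam2_def using Kc by blast
        hence fF2: "finite Fam2" using finite_subset fin by (metis finite_Pow_iff)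
        have "Z0 \<in> Fam2" unfolding Fam2_def using sZ0 Z0K False by simp
        then obtain K0 where K0F: "K0 \<in> Fam2" and K0max: "\<forall>T\<in>Fam2. card T \<le> card K0"
          using exists_max_card[OF fF2] by blast
        have sK0: "subgroup K0 G" and Z0K0: "Z0 \<subseteq> K0" and K0K: "K0 \<subseteq> K" and K0ne: "K0 \<noteq> K"
          using K0F unfolding Fam2_def by auto
        obtain y where y: "y \<in> K" "y \<notin> K0" using K0K K0ne by blast
        have yc: "y \<in> carrier G" using y(1) Kc by blast
        have yD: "y \<in> D" using y(1) KD by blast
        have nK0: "K0 \<lhd> G"
        proof -
          have "g \<otimes> k \<otimes> inv g \<in> K0" if g: "g \<in> carrier G" and k: "k \<in> K0" for g k
          proof -
            have kD: "k \<in> D" using k K0K KD by blast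
            have kc: "k \<in> carrier G" using kD Dc by blast
            have "comm G g k \<in> K0" using good' kD g N'Z0 Z0K0 by blast
            hence "comm G g k \<otimes> k \<in> K0" by (rule subgroup.m_closed[OF sK0 _ k])
            thus ?thesis using conj_eq_comm[OF g kc] by simp
          qed
          thus ?thesis unfolding normal_inv_iff using sK0 by blast
        qed
        define K1 where "K1 = K0 <#> generate G {y}"
        have sgy: "subgroup (generate G {y}) G" using generate_is_subgroup yc by simp
        have sK1: "subgroup K1 G" unfolding K1_def by (rule normal_mult_subgroup[OF nK0 sgy])
        have K0c: "K0 \<subseteq> carrier G" using subgroup.subset[OF sK0] .
        have K0K1: "K0 \<subseteq> K1" unfolding K1_def by (rule left_in_set_mult[OF sgy K0c])
        have yK1: "y \<in> K1" unfolding K1_def by (rule gen_in_set_mult[OF sK0 yc])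
        have gyK: "generate G {y} \<subseteq> K" using generate_subgroup_incl[OF _ sK] y(1) by blast
        have K1K: "K1 \<subseteq> K" unfolding K1_def by (rule set_mult_subset_sub[OF sK K0K gyK])
        have fK1: "finite K1" by (rule finite_subset[OF _ fin]) (use K1K Kc in blast)
        have cK01: "card K0 < card K1" using psubset_card_mono[OF fK1] K0K1 yK1 y(2) by blast
        have K1eq: "K1 = K"
        proof (rule ccontr)
          assume "K1 \<noteq> K"
          hence "K1 \<in> Fam2" unfolding Fam2_def using sK1 Z0K0 K0K1 K1K by blast
          thus False using K0max cK01 by fastforce
        qed
        have fK: "finite K" by (rule finite_subset[OF _ fin]) (use Kc in blast)
        have cK0K: "card K0 < card K" using psubset_card_mono[OF fK] K0K K0ne by blast
        have K0D: "K0 \<subseteq> D" using K0K KD by blast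
        have IH: "card (carrier G) * card Z0 \<le> card K0 * card (cgm G N K0)"
          using less cK0K cK sK0 Z0K0 K0D by blast
        have pK0: "p * card K0 \<le> card K"
          by (rule proper_sub_card[OF fin cG pr sK0 sK K0K K0ne])
        have sC0: "subgroup (cgm G N K0) G" by (rule cgm_subgroup[OF nN K0c])
        have hN': "\<forall>g\<in>cgm G N K0. \<exists>x\<in>N. \<exists>j<p. comm G g y = x \<otimes> u [^] j"
        proof
          fix g assume "g \<in> cgm G N K0"
          hence gc: "g \<in> carrier G" unfolding cgm_def by blast
          have "comm G g y \<in> N'" using good' yD gc by blast
          thus "\<exists>x\<in>N. \<exists>j<p. comm G g y = x \<otimes> u [^] j" using N'elem by blast
        qed
        have fib: "card (cgm G N K0) \<le> p * card {g\<in>cgm G N K0. comm G g y \<in> N}"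
          by (rule fiber_count[OF fin nN uc hu yc sC0 hN'])
        have C1eq: "{g\<in>cgm G N K0. comm G g y \<in> N} = cgm G N K"
        proof
          show "cgm G N K \<subseteq> {g\<in>cgm G N K0. comm G g y \<in> N}"
            unfolding cgm_def using K0K y(1) by blast
        next
          show "{g\<in>cgm G N K0. comm G g y \<in> N} \<subseteq> cgm G N K"
          proof
            fix g assume g: "g \<in> {g\<in>cgm G N K0. comm G g y \<in> N}"
            have gc: "g \<in> carrier G" using g unfolding cgm_def by blast
            have sS: "subgroup (cenm G N {g}) G" using cenm_subgroup[OF nN] gc by simp
            have K0S: "K0 \<subseteq> cenm G N {g}" using g K0c unfolding cgm_def cenm_def by blast
            have yS: "{y} \<subseteq> cenm G N {g}" using g yc unfolding cenm_def by blast
            have gS: "generate G {y} \<subseteq> cenm G N {g}" by (rule generate_subgroup_incl[OF yS sS])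
            have "K \<subseteq> cenm G N {g}" using set_mult_subset_sub[OF sS K0S gS] K1eq unfolding K1_def by simp
            thus "g \<in> cgm G N K" unfolding cgm_def cenm_def using gc by blast
          qed
        qed
        have fib2: "card (cgm G N K0) \<le> p * card (cgm G N K)" using fib C1eq by simp
        have "p * (card (carrier G) * card Z0) \<le> (p * card K0) * card (cgm G N K0)"
          using IH by simp
        also have "\<dots> \<le> card K * card (cgm G N K0)" using pK0 by (rule mult_right_mono) simp
        also have "\<dots> \<le> card K * (p * card (cgm G N K))" using fib2 by (rule mult_left_mono) simp
        finally have "p * (card (carrier G) * card Z0) \<le> p * (card K * card (cgm G N K))"
          by (simp add: ac_simps)
        thus ?thesis using p0 by simp
      qed
    qed
  qed
  define C where "C = cgm G N D"
  have sC: "subgroup C G" unfolding C_def by (rule cgm_subgroup[OF nN Dc])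
  have Cc: "C \<subseteq> carrier G" using subgroup.subset[OF sC] .
  have cl2: "card (carrier G) * card Z0 \<le> card D * card C"
    using claim2 sD subset_refl[of D] Z0D unfolding C_def by blast
  have CneG: "C \<noteq> carrier G"
  proof
    assume "C = carrier G"
    thus False using badN unfolding bad_def C_def cgm_def by blast
  qed
  have CinD: "comm G d c \<in> N" if "c \<in> C" "d \<in> D" for c d
  proof -
    have "comm G c d \<in> N" using that unfolding C_def cgm_def by blast
    hence "inv (comm G c d) \<in> N" by (rule subgroup.m_inv_closed[OF sN])
    moreover have "c \<in> carrier G" "d \<in> carrier G" using that Cc Dc by auto
    ultimately show ?thesis using comm_inv by simp
  qed
  have key: "comm G (comm G a b) z \<in> N" if a: "a \<in> C" and b: "b \<in> C" and z: "z \<in> carrier G" for a b z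
  proof -
    have ac: "a \<in> carrier G" and bc: "b \<in> carrier G" using a b Cc by auto
    have ia: "inv a \<in> C" using subgroup.m_inv_closed[OF sC a] .
    let ?T1 = "inv a \<otimes> comm G (comm G a (inv (inv b))) (inv (inv z)) \<otimes> a"
    let ?T2 = "inv (inv z) \<otimes> comm G (comm G (inv z) (inv a)) (inv (inv b)) \<otimes> inv z"
    let ?T3 = "inv (inv b) \<otimes> comm G (comm G (inv b) (inv (inv z))) (inv a) \<otimes> inv b"
    have hw: "?T1 \<otimes> ?T2 \<otimes> ?T3 = \<one>" using hall_witt[of "inv b" a "inv z"] ac bc z by simp
    have c2: "comm G (comm G (inv z) (inv a)) b \<in> N"
      using CinD[OF b commD[of "inv z" "inv a"]] z ac by simp
    have c3: "comm G (comm G (inv b) z) (inv a) \<in> N"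
      using CinD[OF ia commD[of "inv b" z]] z bc by simp
    have T2: "?T2 \<in> N" using normal_conj[OF nN z c2] z ac bc by simp
    have T3: "?T3 \<in> N" using normal_conj[OF nN bc c3] z ac bc by simp
    have T23: "?T2 \<otimes> ?T3 \<in> N" by (rule subgroup.m_closed[OF sN T2 T3])
    have T1c: "?T1 \<in> carrier G" using ac bc z by simp
    have T23c: "?T2 \<otimes> ?T3 \<in> carrier G" using ac bc z by simp
    have "?T1 \<otimes> (?T2 \<otimes> ?T3) = \<one>" using hw T1c ac bc z by (simp add: m_assoc)
    hence "inv (?T2 \<otimes> ?T3) = ?T1" using inv_equality T1c T23c by blast
    hence T1: "?T1 \<in> N" using subgroup.m_inv_closed[OF sN T23] by simp
    have "a \<otimes> ?T1 \<otimes> inv a \<in> N" by (rule normal_conj[OF nN ac T1])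
    thus ?thesis using ac bc z by (simp add: m_assoc)
  qed
  have claim1: "derived G C \<subseteq> Z0"
    unfolding derived_def
  proof (rule generate_subgroup_incl[OF _ sZ0])
    show "derived_set G C \<subseteq> Z0"
    proof
      fix x assume "x \<in> derived_set G C"
      then obtain a b where ab: "a \<in> C" "b \<in> C" "x = comm G a b" unfolding comm_def by blast
      have ac: "a \<in> carrier G" and bc: "b \<in> carrier G" using ab Cc by auto
      have "comm G z x \<in> N" if z: "z \<in> carrier G" for z
      proof -
        have "comm G x z \<in> N" using key[OF ab(1,2) z] ab(3) by simp
        hence "inv (comm G x z) \<in> N" by (rule subgroup.m_inv_closed[OF sN])
        thus ?thesis using comm_inv z ab ac bc by simp
      qed
      moreover have "x \<in> D" using commD ab ac bc by simp
      ultimately show "x \<in> Z0" unfolding Z0_def cenm_def using Dc by blast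
    qed
  qed
  have fZ0: "finite Z0" by (rule finite_subset[OF Z0c fin])
  have cC': "card (derived G C) \<le> card Z0" by (rule card_mono[OF fZ0 claim1])
  have "order (abelianization (G\<lparr>carrier := C\<rparr>)) < order (abelianization G)"
    using top sC Cc CneG by blast
  moreover have eC: "order (abelianization (G\<lparr>carrier := C\<rparr>)) * card (derived G C) = card C"
    by (rule abel_order_sub[OF sC])
  moreover have eG: "order (abelianization G) * card D = card (carrier G)"
    unfolding D_def by (rule abel_order_G)
  moreover have "card (derived G C) > 0"
  proof -
    have "\<one> \<in> derived G C" using subgroup.one_closed[OF derived_is_subgroup[OF Cc]] .
    moreover have "finite (derived G C)" using finite_subset[OF claim1 fZ0] .
    ultimately show ?thesis by (simp add: card_gt_0_iff) blast
  qed
  moreover have "card D > 0"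
  proof -
    have "finite D" using finite_subset[OF Dc fin] .
    thus ?thesis using subgroup.one_closed[OF sD] by (simp add: card_gt_0_iff) blast
  qed
  ultimately show False using cl2 cC'
  proof -
    fix a b c' d z0 gg cc :: nat
    show "\<lbrakk>a < b; a * c' = cc; b * d = gg; c' > 0; d > 0; gg * z0 \<le> d * cc; c' \<le> z0\<rbrakk> \<Longrightarrow> False"
    proof -
      assume h: "a < b" "a * c' = cc" "b * d = gg" "c' > 0" "d > 0" "gg * z0 \<le> d * cc" "c' \<le> z0"
      have "gg * c' \<le> gg * z0" using h(7) by simp
      also have "\<dots> \<le> d * cc" by (rule h(6))
      also have "\<dots> = (a * d) * c'" using h(2) by simp
      also have "\<dots> < (b * d) * c'" using h(1,4,5) by simp
      finally show False using h(3) by simp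
    qed
  qed
qed

end

context group begin

lemma center_subgroup: "subgroup (center G) G"
proof (rule subgroupI)
  show "center G \<subseteq> carrier G" unfolding center_def by blast
  show "center G \<noteq> {}" unfolding center_def by (auto intro!: exI[of _ \<one>])
next
  fix a assume a: "a \<in> center G"
  have ac: "a \<in> carrier G" using a unfolding center_def by blast
  have "inv a \<otimes> g = g \<otimes> inv a" if g: "g \<in> carrier G" for g
  proof -
    have "a \<otimes> g = g \<otimes> a" using a g unfolding center_def by blast
    hence "inv a \<otimes> (a \<otimes> g) \<otimes> inv a = inv a \<otimes> (g \<otimes> a) \<otimes> inv a" by simp
    thus ?thesis using ac g by (simp add: m_assoc)
  qed
  thus "inv a \<in> center G" using ac unfolding center_def by blast
next
  fix a b assume a: "a \<in> center G" and b: "b \<in> center G"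
  have ac: "a \<in> carrier G" using a unfolding center_def by blast
  have bc: "b \<in> carrier G" using b unfolding center_def by blast
  have "a \<otimes> b \<otimes> g = g \<otimes> (a \<otimes> b)" if g: "g \<in> carrier G" for g
  proof -
    have "a \<otimes> b \<otimes> g = a \<otimes> (g \<otimes> b)" using b g ac bc unfolding center_def by (simp add: m_assoc)
    also have "\<dots> = (a \<otimes> g) \<otimes> b" using ac bc g by (simp add: m_assoc)
    also have "\<dots> = (g \<otimes> a) \<otimes> b" using a g unfolding center_def by simp
    finally show ?thesis using ac bc g by (simp add: m_assoc)
  qed
  thus "a \<otimes> b \<in> center G" using ac bc unfolding center_def by blast
qed

lemma sub_sub_iff:
  assumes "subgroup S G"
  shows "subgroup M (G\<lparr>carrier := S\<rparr>) \<longleftrightarrow> subgroup M G \<and> M \<subseteq> S"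
proof
  assume h: "subgroup M (G\<lparr>carrier := S\<rparr>)"
  have "subgroup M G" by (rule incl_subgroup[OF assms h])
  moreover have "M \<subseteq> S" using subgroup.subset[OF h] by simp
  ultimately show "subgroup M G \<and> M \<subseteq> S" by blast
next
  assume "subgroup M G \<and> M \<subseteq> S"
  thus "subgroup M (G\<lparr>carrier := S\<rparr>)" using subgroup_incl[OF _ assms] by blast
qed

lemma right_in_set_mult:
  assumes "subgroup N G" "K \<subseteq> carrier G" shows "K \<subseteq> N <#> K"
proof
  fix x assume x: "x \<in> K"
  hence "\<one> \<otimes> x \<in> N <#> K" using assms by (intro set_mult_in) (auto intro: subgroup.one_closed)
  thus "x \<in> N <#> K" using x assms by auto
qed

lemma comm_one_imp: "g \<in> carrier G \<Longrightarrow> d \<in> carrier G \<Longrightarrow> comm G g d = \<one> \<Longrightarrow> g \<otimes> d = d \<otimes> g"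
  unfolding comm_def by (metis inv_closed inv_equality inv_inv m_assoc m_closed inv_mult_group)

end

context group begin

lemma central_normal:
  assumes "subgroup A G" "A \<subseteq> center G" shows "A \<lhd> G"
proof -
  have "g \<otimes> a \<otimes> inv g \<in> A" if g: "g \<in> carrier G" and a: "a \<in> A" for g a
  proof -
    have ac: "a \<in> carrier G" using a assms(2) unfolding center_def by blast
    have "a \<otimes> g = g \<otimes> a" using a assms(2) g unfolding center_def by blast
    hence "g \<otimes> a \<otimes> inv g = a \<otimes> g \<otimes> inv g" by simp
    hence "g \<otimes> a \<otimes> inv g = a" using ac g by (simp add: m_assoc)
    thus ?thesis using a by simp
  qed
  thus ?thesis unfolding normal_inv_iff using assms(1) by blast
qed

lemma step_A:
  assumes fin: "finite (carrier G)" and pr: "Factorial_Ring.prime (p::nat)"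
    and Zel: "\<forall>z\<in>center G. z [^] p = \<one>"
  shows "\<exists>A. subgroup A G \<and> A \<subseteq> center G \<and> A \<inter> derived G (carrier G) = {\<one>} \<and>
             center G \<subseteq> A <#> derived G (carrier G)"
proof -
  define D where "D = derived G (carrier G)"
  have sD: "subgroup D G" unfolding D_def using derived_is_subgroup by simp
  have nD: "D \<lhd> G" unfolding D_def using derived_self_is_normal .
  have sZ: "subgroup (center G) G" by (rule center_subgroup)
  have Zc: "center G \<subseteq> carrier G" using subgroup.subset[OF sZ] .
  define Fam where "Fam = {A. subgroup A G \<and> A \<subseteq> center G \<and> A \<inter> D = {\<one>}}"
  have "Fam \<subseteq> Pow (carrier G)" unfolding Fam_def using Zc by blast
  hence fFam: "finite Fam" using finite_subset fin by (metis finite_Pow_iff)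
  have "{\<one>} \<subseteq> center G" using subgroup.one_closed[OF sZ] by simp
  moreover have "{\<one>} \<inter> D = {\<one>}" using subgroup.one_closed[OF sD] by simp
  ultimately have "{\<one>} \<in> Fam" unfolding Fam_def using triv_subgroup by simp
  then obtain A where AF: "A \<in> Fam" and Amax: "\<forall>T\<in>Fam. card T \<le> card A"
    using exists_max_card[OF fFam] by blast
  have sA: "subgroup A G" and AZ: "A \<subseteq> center G" and AD: "A \<inter> D = {\<one>}"
    using AF unfolding Fam_def by auto
  have nA: "A \<lhd> G" by (rule central_normal[OF sA AZ])
  have Ac: "A \<subseteq> carrier G" using subgroup.subset[OF sA] .
  have p0: "p > 0" using pr prime_gt_0_nat by blast
  have "center G \<subseteq> A <#> D"
  proof
    fix z assume zZ: "z \<in> center G"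
    show "z \<in> A <#> D"
    proof (rule ccontr)
      assume zn: "z \<notin> A <#> D"
      have zc: "z \<in> carrier G" using zZ Zc by blast
      define A2 where "A2 = A <#> generate G {z}"
      have sgen: "subgroup (generate G {z}) G" using generate_is_subgroup zc by simp
      have sA2: "subgroup A2 G" unfolding A2_def by (rule normal_mult_subgroup[OF nA sgen])
      have genZ: "generate G {z} \<subseteq> center G" using generate_subgroup_incl[OF _ sZ] zZ by blast
      have A2Z: "A2 \<subseteq> center G" unfolding A2_def by (rule set_mult_subset_sub[OF sZ AZ genZ])
      have sT: "subgroup (A <#> D) G" by (rule normal_mult_subgroup[OF nA sD])
      have zpA: "z [^] p \<in> A" using Zel zZ subgroup.one_closed[OF sA] by simp
      have A2D: "A2 \<inter> D = {\<one>}"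
      proof
        show "{\<one>} \<subseteq> A2 \<inter> D" using subgroup.one_closed[OF sA2] subgroup.one_closed[OF sD] by simp
      next
        show "A2 \<inter> D \<subseteq> {\<one>}"
        proof
          fix w assume w: "w \<in> A2 \<inter> D"
          obtain a k where ak: "a \<in> A" "k < p" "w = a \<otimes> z [^] k"
            using ext_elem[OF sA zc zpA p0] w unfolding A2_def by blast
          have acar: "a \<in> carrier G" using ak(1) Ac by blast
          show "w \<in> {\<one>}"
          proof (cases "k = 0")
            case True
            hence "w = a" using ak acar by simp
            thus ?thesis using w ak(1) AD by blast
          next
            case False
            have "z [^] k = inv a \<otimes> w" using ak(3) acar zc by (simp add: m_assoc)
            moreover have "inv a \<otimes> w \<in> A <#> D"
              using w subgroup.m_inv_closed[OF sA ak(1)] by (intro set_mult_in) auto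
            ultimately have zk: "z [^] k \<in> A <#> D" by simp
            have "A \<subseteq> A <#> D" by (rule left_in_set_mult[OF sD Ac])
            hence zpT: "z [^] p \<in> A <#> D" using zpA by blast
            have "\<not> p dvd k" using False ak(2) by (meson dvd_imp_le neq0_conv not_le)
            hence "z \<in> A <#> D" by (rule ext_back[OF sT zc zpT pr _ zk])
            thus ?thesis using zn by blast
          qed
        qed
      qed
      have "A2 \<in> Fam" unfolding Fam_def using sA2 A2Z A2D by blast
      hence c1: "card A2 \<le> card A" using Amax by blast
      have AA2: "A \<subseteq> A2" unfolding A2_def by (rule left_in_set_mult[OF sgen Ac])
      have zA2: "z \<in> A2" unfolding A2_def by (rule gen_in_set_mult[OF sA zc])
      have "A \<subseteq> A <#> D" by (rule left_in_set_mult[OF sD Ac])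
      hence zA: "z \<notin> A" using zn by blast
      have fA2: "finite A2" by (rule finite_subset[OF _ fin]) (use A2Z Zc in blast)
      have "card A < card A2" using psubset_card_mono[OF fA2] AA2 zA2 zA by blast
      thus False using c1 by simp
    qed
  qed
  thus ?thesis using sA AZ AD unfolding D_def by blast
qed

lemma step_S:
  assumes fin: "finite (carrier G)" and pr: "Factorial_Ring.prime (p::nat)"
    and Gel: "\<forall>g\<in>carrier G. g [^] p \<in> derived G (carrier G)"
    and sA: "subgroup A G" and nA: "A \<lhd> G" and AD: "A \<inter> derived G (carrier G) = {\<one>}"
  shows "\<exists>S. subgroup S G \<and> derived G (carrier G) \<subseteq> S \<and> S \<inter> A = {\<one>} \<and> S <#> A = carrier G"
proof -
  define D where "D = derived G (carrier G)"
  have sD: "subgroup D G" unfolding D_def using derived_is_subgroup by simp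
  have Dc: "D \<subseteq> carrier G" using subgroup.subset[OF sD] .
  have Ac: "A \<subseteq> carrier G" using subgroup.subset[OF sA] .
  define Fam where "Fam = {S. subgroup S G \<and> D \<subseteq> S \<and> S \<inter> A = {\<one>}}"
  have "Fam \<subseteq> Pow (carrier G)" unfolding Fam_def using subgroup.subset by blast
  hence fFam: "finite Fam" using finite_subset fin by (metis finite_Pow_iff)
  have "D \<inter> A = {\<one>}" using AD unfolding D_def by blast
  hence "D \<in> Fam" unfolding Fam_def using sD by simp
  then obtain S where SF: "S \<in> Fam" and Smax: "\<forall>T\<in>Fam. card T \<le> card S"
    using exists_max_card[OF fFam] by blast
  have sS: "subgroup S G" and DS: "D \<subseteq> S" and SA: "S \<inter> A = {\<one>}"
    using SF unfolding Fam_def by auto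
  have nS: "S \<lhd> G" using normal_of_derived[OF sS] DS unfolding D_def by blast
  have Sc: "S \<subseteq> carrier G" using subgroup.subset[OF sS] .
  have p0: "p > 0" using pr prime_gt_0_nat by blast
  have sT: "subgroup (S <#> A) G" by (rule normal_mult_subgroup[OF nS sA])
  have "carrier G \<subseteq> S <#> A"
  proof
    fix g assume gc: "g \<in> carrier G"
    show "g \<in> S <#> A"
    proof (rule ccontr)
      assume gn: "g \<notin> S <#> A"
      define S2 where "S2 = S <#> generate G {g}"
      have sgen: "subgroup (generate G {g}) G" using generate_is_subgroup gc by simp
      have sS2: "subgroup S2 G" unfolding S2_def by (rule normal_mult_subgroup[OF nS sgen])
      have SS2: "S \<subseteq> S2" unfolding S2_def by (rule left_in_set_mult[OF sgen Sc])
      have gpS: "g [^] p \<in> S" using Gel gc DS unfolding D_def by blast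
      have S2A: "S2 \<inter> A = {\<one>}"
      proof
        show "{\<one>} \<subseteq> S2 \<inter> A" using subgroup.one_closed[OF sS2] subgroup.one_closed[OF sA] by simp
      next
        show "S2 \<inter> A \<subseteq> {\<one>}"
        proof
          fix w assume w: "w \<in> S2 \<inter> A"
          obtain a k where ak: "a \<in> S" "k < p" "w = a \<otimes> g [^] k"
            using ext_elem[OF sS gc gpS p0] w unfolding S2_def by blast
          have acar: "a \<in> carrier G" using ak(1) Sc by blast
          show "w \<in> {\<one>}"
          proof (cases "k = 0")
            case True
            hence "w = a" using ak acar by simp
            thus ?thesis using w ak(1) SA by blast
          next
            case False
            have "g [^] k = inv a \<otimes> w" using ak(3) acar gc by (simp add: m_assoc)
            moreover have "inv a \<otimes> w \<in> S <#> A"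
              using w subgroup.m_inv_closed[OF sS ak(1)] by (intro set_mult_in) auto
            ultimately have gk: "g [^] k \<in> S <#> A" by simp
            have "S \<subseteq> S <#> A" by (rule left_in_set_mult[OF sA Sc])
            hence gpT: "g [^] p \<in> S <#> A" using gpS by blast
            have "\<not> p dvd k" using False ak(2) by (meson dvd_imp_le neq0_conv not_le)
            hence "g \<in> S <#> A" by (rule ext_back[OF sT gc gpT pr _ gk])
            thus ?thesis using gn by blast
          qed
        qed
      qed
      have "D \<subseteq> S2" using DS SS2 by blast
      hence "S2 \<in> Fam" unfolding Fam_def using sS2 S2A by blast
      hence c1: "card S2 \<le> card S" using Smax by blast
      have gS2: "g \<in> S2" unfolding S2_def by (rule gen_in_set_mult[OF sS gc])
      have "S \<subseteq> S <#> A" by (rule left_in_set_mult[OF sA Sc])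
      hence gS: "g \<notin> S" using gn by blast
      have fS2: "finite S2" by (rule finite_subset[OF subgroup.subset[OF sS2] fin])
      have "card S < card S2" using psubset_card_mono[OF fS2] SS2 gS2 gS by blast
      thus False using c1 by simp
    qed
  qed
  moreover have "S <#> A \<subseteq> carrier G" by (rule setmult_subset_G[OF Sc Ac])
  ultimately have "S <#> A = carrier G" by blast
  thus ?thesis using sS DS SA unfolding D_def by blast
qed

lemma special_S:
  assumes fin: "finite (carrier G)" and cG: "card (carrier G) = p ^ n" and pr: "Factorial_Ring.prime (p::nat)"
    and DZ: "derived G (carrier G) \<subseteq> center G"
    and Gel: "\<forall>g\<in>carrier G. g [^] p \<in> derived G (carrier G)"
    and sS: "subgroup S G" and DS: "derived G (carrier G) \<subseteq> S" and SA: "S \<inter> A = {\<one>}"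
    and SAG: "S <#> A = carrier G" and sA: "subgroup A G" and AZ: "A \<subseteq> center G"
    and ZAD: "center G \<subseteq> A <#> derived G (carrier G)"
  shows "special_p_group p (G\<lparr>carrier := S\<rparr>)"
proof -
  define D where "D = derived G (carrier G)"
  have sD: "subgroup D G" unfolding D_def using derived_is_subgroup by simp
  have Dc: "D \<subseteq> carrier G" using subgroup.subset[OF sD] .
  have Sc: "S \<subseteq> carrier G" using subgroup.subset[OF sS] .
  have Ac: "A \<subseteq> carrier G" using subgroup.subset[OF sA] .
  have DS': "D \<subseteq> S" using DS unfolding D_def .
  have DZ': "D \<subseteq> center G" using DZ unfolding D_def .
  interpret GS: group "G\<lparr>carrier := S\<rparr>" using sS subgroup_imp_group by blast
  have cent: "\<forall>g\<in>carrier G. z \<otimes> g = g \<otimes> z" if "z \<in> center G" for z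
    using that unfolding center_def by blast
  have dec: "\<exists>s\<in>S. \<exists>a\<in>A. g = s \<otimes> a" if "g \<in> carrier G" for g
    using that SAG unfolding set_mult_def by blast
  have p0: "p > 0" using pr prime_gt_0_nat by blast
  have pg: "p_group p (G\<lparr>carrier := S\<rparr>)"
    unfolding p_group_def using GS.is_group fin Sc finite_subset card_sub_ppow[OF fin cG pr sS] by auto
  have dS: "derived G S = D"
  proof
    show "derived G S \<subseteq> D" unfolding D_def by (rule mono_derived[OF Sc])
  next
    have "derived_set G (carrier G) \<subseteq> derived_set G S"
    proof
      fix x assume "x \<in> derived_set G (carrier G)"
      then obtain g1 g2 where g: "g1 \<in> carrier G" "g2 \<in> carrier G"
        "x = g1 \<otimes> g2 \<otimes> inv g1 \<otimes> inv g2" by blast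
      obtain s1 a1 where sa1: "s1 \<in> S" "a1 \<in> A" "g1 = s1 \<otimes> a1" using dec[OF g(1)] by blast
      obtain s2 a2 where sa2: "s2 \<in> S" "a2 \<in> A" "g2 = s2 \<otimes> a2" using dec[OF g(2)] by blast
      have c: "s1 \<in> carrier G" "s2 \<in> carrier G" "a1 \<in> carrier G" "a2 \<in> carrier G"
        using sa1 sa2 Sc Ac by auto
      have "x = comm G g1 g2" using g(3) by (simp add: comm_def)
      also have "\<dots> = comm G s1 s2"
        using comm_central[OF c cent cent] sa1 sa2 AZ by blast
      finally show "x \<in> derived_set G S" using sa1(1) sa2(1) unfolding comm_def by blast
    qed
    thus "D \<subseteq> derived G S" unfolding D_def derived_def by (rule mono_generate)
  qed
  have commS: "commutator_subgroup (G\<lparr>carrier := S\<rparr>) = D"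
    unfolding commutator_subgroup_def using derived_consistent[OF subset_refl sS] dS by simp
  have centS: "center (G\<lparr>carrier := S\<rparr>) = D"
  proof
    show "D \<subseteq> center (G\<lparr>carrier := S\<rparr>)"
    proof
      fix x assume x: "x \<in> D"
      have "\<forall>g\<in>carrier G. x \<otimes> g = g \<otimes> x" using cent[of x] x DZ' by blast
      hence "\<forall>g\<in>S. x \<otimes> g = g \<otimes> x" using Sc by blast
      thus "x \<in> center (G\<lparr>carrier := S\<rparr>)" unfolding center_def using x DS' by auto
    qed
  next
    show "center (G\<lparr>carrier := S\<rparr>) \<subseteq> D"
    proof
      fix z assume z: "z \<in> center (G\<lparr>carrier := S\<rparr>)"
      have zS: "z \<in> S" and zcomm: "\<forall>g\<in>S. z \<otimes> g = g \<otimes> z" using z unfolding center_def by auto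
      have zc: "z \<in> carrier G" using zS Sc by blast
      have zZ: "z \<in> center G"
      proof -
        have "z \<otimes> g = g \<otimes> z" if g: "g \<in> carrier G" for g
        proof -
          obtain s a where sa: "s \<in> S" "a \<in> A" "g = s \<otimes> a" using dec[OF g] by blast
          have sc: "s \<in> carrier G" and ac: "a \<in> carrier G" using sa Sc Ac by auto
          have ca: "z \<otimes> a = a \<otimes> z" using cent[of a] sa(2) AZ zc by auto
          have "z \<otimes> g = (z \<otimes> s) \<otimes> a" using sa zc sc ac by (simp add: m_assoc)
          also have "\<dots> = s \<otimes> (z \<otimes> a)" using zcomm sa(1) zc sc ac by (simp add: m_assoc)
          also have "\<dots> = g \<otimes> z" using ca sa zc sc ac by (simp add: m_assoc)
          finally show ?thesis .
        qed
        thus ?thesis unfolding center_def using zc by blast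
      qed
      then obtain a d where ad: "a \<in> A" "d \<in> D" "z = a \<otimes> d"
        using ZAD unfolding set_mult_def D_def by blast
      have ac: "a \<in> carrier G" and dc: "d \<in> carrier G" using ad Ac Dc by auto
      have "a = z \<otimes> inv d" using ad ac dc by (simp add: m_assoc)
      moreover have "z \<otimes> inv d \<in> S"
        using subgroup.m_closed[OF sS zS subgroup.m_inv_closed[OF sS]] ad(2) DS' by blast
      ultimately have "a \<in> S \<inter> A" using ad(1) by simp
      hence "a = \<one>" using SA by blast
      thus "z \<in> D" using ad dc by simp
    qed
  qed
  have fratS: "frattini (G\<lparr>carrier := S\<rparr>) = D"
  proof
    show "D \<subseteq> frattini (G\<lparr>carrier := S\<rparr>)"
    proof
      fix d assume dD: "d \<in> D"
      have "d \<in> M" if M: "maximal_subgroup M (G\<lparr>carrier := S\<rparr>)" for M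
      proof (rule ccontr)
        assume dM: "d \<notin> M"
        have sMS: "subgroup M (G\<lparr>carrier := S\<rparr>)" using M unfolding maximal_subgroup_def by blast
        have sM: "subgroup M G" and MS: "M \<subseteq> S" using sMS sub_sub_iff[OF sS] by auto
        have Mc: "M \<subseteq> carrier G" using subgroup.subset[OF sM] .
        have nD: "D \<lhd> G" unfolding D_def using derived_self_is_normal .
        define M2 where "M2 = D <#> M"
        have sM2: "subgroup M2 G" unfolding M2_def by (rule normal_mult_subgroup[OF nD sM])
        have M2S: "M2 \<subseteq> S" unfolding M2_def by (rule set_mult_subset_sub[OF sS DS' MS])
        have MM2: "M \<subseteq> M2" unfolding M2_def by (rule right_in_set_mult[OF sD Mc])
        have dM2: "d \<in> M2" unfolding M2_def using left_in_set_mult[OF sM Dc] dD by blast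
        have "subgroup M2 (G\<lparr>carrier := S\<rparr>)" using sub_sub_iff[OF sS] sM2 M2S by blast
        hence "M2 = M \<or> M2 = S" using M MM2 unfolding maximal_subgroup_def by auto
        hence M2eq: "M2 = S" using dM2 dM by blast
        have "derived_set G S \<subseteq> M"
        proof
          fix x assume "x \<in> derived_set G S"
          then obtain g1 g2 where g: "g1 \<in> S" "g2 \<in> S"
            "x = g1 \<otimes> g2 \<otimes> inv g1 \<otimes> inv g2" by blast
          obtain d1 m1 where dm1: "d1 \<in> D" "m1 \<in> M" "g1 = d1 \<otimes> m1"
            using g(1) M2eq unfolding M2_def set_mult_def by blast
          obtain d2 m2 where dm2: "d2 \<in> D" "m2 \<in> M" "g2 = d2 \<otimes> m2"
            using g(2) M2eq unfolding M2_def set_mult_def by blast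
          have c: "m1 \<in> carrier G" "m2 \<in> carrier G" "d1 \<in> carrier G" "d2 \<in> carrier G"
            using dm1 dm2 Mc Dc by auto
          have e1: "g1 = m1 \<otimes> d1" using dm1 cent[of d1] DZ' c by auto
          have e2: "g2 = m2 \<otimes> d2" using dm2 cent[of d2] DZ' c by auto
          have "x = comm G g1 g2" using g(3) by (simp add: comm_def)
          also have "\<dots> = comm G m1 m2"
            using comm_central[OF c cent cent] e1 e2 dm1 dm2 DZ' by blast
          finally have "x = m1 \<otimes> m2 \<otimes> inv m1 \<otimes> inv m2" by (simp add: comm_def)
          thus "x \<in> M" using dm1(2) dm2(2) sM
            by (metis subgroup.m_closed subgroup.m_inv_closed)
        qed
        hence "derived G S \<subseteq> M" unfolding derived_def by (rule generate_subgroup_incl[OF _ sM])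
        thus False using dS dD dM by blast
      qed
      thus "d \<in> frattini (G\<lparr>carrier := S\<rparr>)" unfolding frattini_def using dD DS' by auto
    qed
  next
    show "frattini (G\<lparr>carrier := S\<rparr>) \<subseteq> D"
    proof
      fix y assume yF: "y \<in> frattini (G\<lparr>carrier := S\<rparr>)"
      have yS: "y \<in> S" using yF unfolding frattini_def by simp
      show "y \<in> D"
      proof (rule ccontr)
        assume yD: "y \<notin> D"
        have yc: "y \<in> carrier G" using yS Sc by blast
        define Fam where "Fam = {T. subgroup T G \<and> D \<subseteq> T \<and> T \<subseteq> S \<and> y \<notin> T}"
        have "Fam \<subseteq> Pow (carrier G)" unfolding Fam_def using Sc by blast
        hence fFam: "finite Fam" using finite_subset fin by (metis finite_Pow_iff)
        have "D \<in> Fam" unfolding Fam_def using sD DS' yD by blast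
        then obtain M where MF: "M \<in> Fam" and Mmax: "\<forall>T\<in>Fam. card T \<le> card M"
          using exists_max_card[OF fFam] by blast
        have sM: "subgroup M G" and DM: "D \<subseteq> M" and MS: "M \<subseteq> S" and yM: "y \<notin> M"
          using MF unfolding Fam_def by auto
        have Mc: "M \<subseteq> carrier G" using subgroup.subset[OF sM] .
        have nM: "M \<lhd> G" using normal_of_derived[OF sM] DM unfolding D_def by blast
        have "maximal_subgroup M (G\<lparr>carrier := S\<rparr>)"
          unfolding maximal_subgroup_def
        proof (intro conjI allI impI)
          show "subgroup M (G\<lparr>carrier := S\<rparr>)" using sub_sub_iff[OF sS] sM MS by blast
          show "M \<noteq> carrier (G\<lparr>carrier := S\<rparr>)" using yM yS by auto
        next
          fix K assume K: "subgroup K (G\<lparr>carrier := S\<rparr>) \<and> M \<subseteq> K"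
          have sK: "subgroup K G" and KS: "K \<subseteq> S" using K sub_sub_iff[OF sS] by auto
          have MK: "M \<subseteq> K" using K by blast
          show "K = M \<or> K = carrier (G\<lparr>carrier := S\<rparr>)"
          proof (cases "K = M")
            case True thus ?thesis by blast
          next
            case False
            have fK: "finite K" by (rule finite_subset[OF subgroup.subset[OF sK] fin])
            have "card M < card K" using psubset_card_mono[OF fK] MK False by blast
            hence "K \<notin> Fam" using Mmax by fastforce
            hence yK: "y \<in> K" unfolding Fam_def using sK DM MK KS by blast
            have "S \<subseteq> K"
            proof
              fix z assume zS: "z \<in> S"
              show "z \<in> K"
              proof (cases "z \<in> M")
                case True thus ?thesis using MK by blast
              next
                case False
                have zc: "z \<in> carrier G" using zS Sc by blast
                define M2 where "M2 = M <#> generate G {z}"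
                have sgen: "subgroup (generate G {z}) G" using generate_is_subgroup zc by simp
                have sM2: "subgroup M2 G" unfolding M2_def by (rule normal_mult_subgroup[OF nM sgen])
                have MM2: "M \<subseteq> M2" unfolding M2_def by (rule left_in_set_mult[OF sgen Mc])
                have zM2: "z \<in> M2" unfolding M2_def by (rule gen_in_set_mult[OF sM zc])
                have genS: "generate G {z} \<subseteq> S" using generate_subgroup_incl[OF _ sS] zS by blast
                have M2S: "M2 \<subseteq> S" unfolding M2_def by (rule set_mult_subset_sub[OF sS MS genS])
                have fM2: "finite M2" by (rule finite_subset[OF subgroup.subset[OF sM2] fin])
                have "card M < card M2" using psubset_card_mono[OF fM2] MM2 zM2 False by blast
                hence "M2 \<notin> Fam" using Mmax by fastforce
                hence yM2: "y \<in> M2" unfolding Fam_def using sM2 DM MM2 M2S by blast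
                have zpM: "z [^] p \<in> M" using Gel zc DM unfolding D_def by blast
                obtain m k where mk: "m \<in> M" "k < p" "y = m \<otimes> z [^] k"
                  using ext_elem[OF sM zc zpM p0] yM2 unfolding M2_def by blast
                have mc: "m \<in> carrier G" using mk(1) Mc by blast
                have k0: "k \<noteq> 0"
                proof
                  assume "k = 0"
                  hence "y = m" using mk mc by simp
                  thus False using yM mk(1) by blast
                qed
                have "z [^] k = inv m \<otimes> y" using mk(3) mc zc by (simp add: m_assoc)
                moreover have "inv m \<otimes> y \<in> K"
                  using subgroup.m_closed[OF sK subgroup.m_inv_closed[OF sK] yK] mk(1) MK by blast
                ultimately have zk: "z [^] k \<in> K" by simp
                have zpK: "z [^] p \<in> K" using zpM MK by blast
                have "\<not> p dvd k" using k0 mk(2) by (meson dvd_imp_le neq0_conv not_le)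
                thus "z \<in> K" by (rule ext_back[OF sK zc zpK pr _ zk])
              qed
            qed
            thus ?thesis using KS by auto
          qed
        qed
        thus False using yF yM unfolding frattini_def by blast
      qed
    qed
  qed
  show ?thesis unfolding special_p_group_def using pg commS centS fratS by simp
qed

end

lemma (in group) main_thm:
  assumes "Factorial_Ring.prime p"
    and "top_group G"
    and "p_group p G"
    and "elementary_abelian p (G\<lparr>carrier := center G\<rparr>)"
    and "elementary_abelian p (abelianization G)"
  shows "\<exists>S A. S \<lhd> G \<and> A \<lhd> G \<and> S \<inter> A = {\<one>} \<and> S <#> A = carrier G \<and>
              special_p_group p (G\<lparr>carrier := S\<rparr>) \<and> comm_group (G\<lparr>carrier := A\<rparr>)"
proof -
  have grp: "group G" using is_group .
  have fin: "finite (carrier G)"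
    and top: "\<forall>H. subgroup H G \<and> H \<subset> carrier G \<longrightarrow>
                 order (abelianization (G\<lparr>carrier := H\<rparr>)) < order (abelianization G)"
    using assms(2) unfolding top_group_def by auto
  obtain n where cG: "card (carrier G) = p ^ n" using assms(3) unfolding p_group_def by blast
  have pr: "Factorial_Ring.prime p" by (rule assms(1))
  define D where "D = derived G (carrier G)"
  have sD: "subgroup D G" unfolding D_def using derived_is_subgroup by simp
  have nD: "D \<lhd> G" unfolding D_def using derived_self_is_normal .
  have Dc: "D \<subseteq> carrier G" using subgroup.subset[OF sD] .
  have dc: "\<forall>d\<in>D. \<forall>g\<in>carrier G. comm G g d = \<one>"
    using derived_central[OF fin cG pr top] unfolding D_def .
  have DZ: "D \<subseteq> center G"
  proof
    fix d assume d: "d \<in> D"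
    have dcar: "d \<in> carrier G" using d Dc by blast
    have "d \<otimes> g = g \<otimes> d" if g: "g \<in> carrier G" for g
      using comm_one_imp[OF g dcar] dc d g by simp
    thus "d \<in> center G" unfolding center_def using dcar by blast
  qed
  have Zel: "\<forall>z\<in>center G. z [^] p = \<one>"
  proof
    fix z assume "z \<in> center G"
    hence "z [^]\<^bsub>G\<lparr>carrier := center G\<rparr>\<^esub> p = \<one>\<^bsub>G\<lparr>carrier := center G\<rparr>\<^esub>"
      using assms(4) unfolding elementary_abelian_def by simp
    thus "z [^] p = \<one>" unfolding nat_pow_def by simp
  qed
  have Gel: "\<forall>g\<in>carrier G. g [^] p \<in> D"
  proof
    fix g assume gc: "g \<in> carrier G"
    have ab: "abelianization G = G Mod D" unfolding abelianization_def commutator_subgroup_def D_def ..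
    have Dg: "D #> g \<in> carrier (G Mod D)" unfolding FactGroup_def RCOSETS_def using gc by auto
    have e1: "(D #> g) [^]\<^bsub>G Mod D\<^esub> p = \<one>\<^bsub>G Mod D\<^esub>"
      using assms(5) Dg unfolding elementary_abelian_def ab by blast
    have hom: "(\<lambda>a. D #> a) \<in> hom G (G Mod D)" by (rule normal.r_coset_hom_Mod[OF nD])
    have "D #> (g [^] p) = (D #> g) [^]\<^bsub>G Mod D\<^esub> p"
      by (rule hom_nat_pow[OF hom gc grp normal.factorgroup_is_group[OF nD]])
    hence "D #> (g [^] p) = D" using e1 unfolding FactGroup_def by simp
    moreover have "g [^] p \<in> D #> (g [^] p)" using rcos_self[OF _ sD] gc by simp
    ultimately show "g [^] p \<in> D" by simp
  qed
  obtain A where sA: "subgroup A G" and AZ: "A \<subseteq> center G" and AD: "A \<inter> D = {\<one>}"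
    and ZAD: "center G \<subseteq> A <#> D"
    using step_A[OF fin pr Zel] unfolding D_def by blast
  have nA: "A \<lhd> G" by (rule central_normal[OF sA AZ])
  obtain S where sS: "subgroup S G" and DS: "D \<subseteq> S" and SA: "S \<inter> A = {\<one>}" and SAG: "S <#> A = carrier G"
    using step_S[OF fin pr Gel[unfolded D_def] sA nA AD[unfolded D_def]] unfolding D_def by blast
  have nS: "S \<lhd> G" using normal_of_derived[OF sS] DS unfolding D_def by blast
  have spec: "special_p_group p (G\<lparr>carrier := S\<rparr>)"
    by (rule special_S[OF fin cG pr DZ[unfolded D_def] Gel[unfolded D_def] sS DS[unfolded D_def]
          SA SAG sA AZ ZAD[unfolded D_def]])
  have cA: "comm_group (G\<lparr>carrier := A\<rparr>)"
  proof (rule group.group_comm_groupI)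
    show "group (G\<lparr>carrier := A\<rparr>)" using sA subgroup_imp_group by blast
  next
    fix x y assume "x \<in> carrier (G\<lparr>carrier := A\<rparr>)" "y \<in> carrier (G\<lparr>carrier := A\<rparr>)"
    hence x: "x \<in> center G" and y: "y \<in> A" using AZ by auto
    have "y \<in> carrier G" using y subgroup.subset[OF sA] by blast
    thus "x \<otimes>\<^bsub>G\<lparr>carrier := A\<rparr>\<^esub> y = y \<otimes>\<^bsub>G\<lparr>carrier := A\<rparr>\<^esub> x"
      using x unfolding center_def by simp
  qed
  show ?thesis using nS nA SA SAG spec cA by blast
qed

theorem lemma3p2:
  fixes G :: "('a, 'b) monoid_scheme" and p :: nat
  assumes "Factorial_Ring.prime p"
    and "top_group G"
    and "p_group p G"
    and "elementary_abelian p (G\<lparr>carrier := center G\<rparr>)"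
    and "elementary_abelian p (abelianization G)"
  shows "\<exists>S A. S \<lhd> G \<and> A \<lhd> G \<and> S \<inter> A = {\<one>\<^bsub>G\<^esub>} \<and> S <#>\<^bsub>G\<^esub> A = carrier G \<and>
              special_p_group p (G\<lparr>carrier := S\<rparr>) \<and> comm_group (G\<lparr>carrier := A\<rparr>)"
proof -
  have "group G" using assms(2) unfolding top_group_def by blast
  thus ?thesis using group.main_thm[OF _ assms] by blast
qed


end
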